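(* Let $(M,\Sigma_M,\mu,T)$ be a Bernoulli system, where $(M,d_M)$ is a separable metric space and $\Sigma_M$ contains all open balls of $(M,d_M)$. Then for every $\varepsilon>0$ there is an irreducible and aperiodic Markov process, with outcome space a finite subset of $M$, such that $(M,\Sigma_M,\mu,T)$ is $\varepsilon$-congruent to (the deterministic representation of) this Markov process.
   Context: A deterministic system is a quadruple $(M,\Sigma_M,\mu,T)$ where $(M,\Sigma_M,\mu)$ is a probability space and $T:M\to M$ is a bijection with $T,T^{-1}$ measurable; measure-preserving means $\mu(T(A))=\mu(A)$ for all $A\in\Sigma_M$. A Bernoulli process is a stochastic process $\{Z_t;t\in\mathbb{Z}\}$ with finite outcome space $\{s_1,\dots,s_N\}$ (power-set $\sigma$-algebra), $P\{Z_t=s_k\}=p_k$ for all $t,k$, and the $Z_t$ independent. The deterministic representation of a process $\{Z_t\}$ with values in $(\bar M,\Sigma_{\bar M})$ is $(M_2,\Sigma_{M_2},\mu_2,T_2,\Phi_0)$: $M_2$ is the set of bi-infinite sequences over $\bar M$, $\Sigma_{M_2}$ is generated by cylinder sets $\{m:m_{i_1}\in A_1,\dots,m_{i_n}\in A_n\}$, $\mu_2$ is the unique measure giving each cylinder probability $P\{Z_{i_1}\in A_1,\dots,Z_{i_n}\in A_n\}$, $T_2$ is the left shift, $\Phi_0(m)=m_0$. The deterministic representation of a Bernoulli process is a Bernoulli shift. Two measure-preserving systems are isomorphic if there are full-measure measurable subsets $\hat M_1,\hat M_2$ with $T_i\hat M_i\subseteq\hat M_i$ and a bijection $\phi:\hat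 M_1\to\hat M_2$ such that $\phi,\phi^{-1}$ preserve measurability, $\phi$ preserves measure, and $\phi\circ T_1=T_2\circ\phi$ on $\hat M_1$. A Bernoulli system is a measure-preserving system isomorphic to a Bernoulli shift. A Markov process is a stationary process with finite outcome space $\{s_1,\dots,s_N\}$ such that $P\{Z_{t+1}=s_j\mid Z_t,Z_{t-1},\dots,Z_k\}=P\{Z_{t+1}=s_j\mid Z_t\}$ for all $t$, $k\le t$, $j$. With $P^k(s_i,s_j):=P\{Z_{n+k}=s_i\mid Z_n=s_j\}$, it is irreducible if for all $i,j$ there is $k\in\mathbb{N}$ with $P^k(s_i,s_j)>0$, and aperiodic if for each $i$, $\gcd\{n\ge1: P^n(s_i,s_i)>0\}=1$. $(M,\Sigma_M,\mu,T)$ is $\varepsilon$-congruent to the deterministic representation $(M_2,\Sigma_{M_2},\mu_2,T_2,\Phi_0)$ of a stationary process with values in $M$ if it is isomorphic to $(M_2,\Sigma_{M_2},\mu_2,T_2)$ via some $\phi$ and $d_M(m,\Phi_0(\phi(m)))<\varepsilon$ for all $m$ outside a set of $\mu$-measure $<\varepsilon$. *)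

theory Defs
  imports "HOL-Probability.Probability"
begin

definition mp_system :: "'a measure \<Rightarrow> ('a \<Rightarrow> 'a) \<Rightarrow> bool" where
  "mp_system M T \<longleftrightarrow> prob_space M \<and> bij_betw T (space M) (space M)
     \<and> T \<in> M \<rightarrow>\<^sub>M M \<and> the_inv_into (space M) T \<in> M \<rightarrow>\<^sub>M M
     \<and> (\<forall>A\<in>sets M. emeasure M (T ` A) = emeasure M A)"

definition mp_isomorphic_via ::
  "'a measure \<Rightarrow> ('a \<Rightarrow> 'a) \<Rightarrow> 'b measure \<Rightarrow> ('b \<Rightarrow> 'b) \<Rightarrow> ('a \<Rightarrow> 'b) \<Rightarrow> bool" where
  "mp_isomorphic_via M1 T1 M2 T2 \<phi> \<longleftrightarrow> (\<exists>H1 H2.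
      H1 \<in> sets M1 \<and> H2 \<in> sets M2
    \<and> emeasure M1 (space M1 - H1) = 0 \<and> emeasure M2 (space M2 - H2) = 0
    \<and> T1 ` H1 \<subseteq> H1 \<and> T2 ` H2 \<subseteq> H2
    \<and> bij_betw \<phi> H1 H2
    \<and> (\<forall>A\<in>sets M1. A \<subseteq> H1 \<longrightarrow> \<phi> ` A \<in> sets M2)
    \<and> (\<forall>B\<in>sets M2. B \<subseteq> H2 \<longrightarrow> {x\<in>H1. \<phi> x \<in> B} \<in> sets M1)
    \<and> (\<forall>A\<in>sets M1. A \<subseteq> H1 \<longrightarrow> emeasure M2 (\<phi> ` A) = emeasure M1 A)
    \<and> (\<forall>x\<in>H1. \<phi> (T1 x) = T2 (\<phi> x)))"

definition finite_process :: "'w measure \<Rightarrow> (int \<Rightarrow> 'w \<Rightarrow> 'b) \<Rightarrow> 'b set \<Rightarrow> bool" where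
  "finite_process P Z S \<longleftrightarrow> prob_space P \<and> finite S \<and> S \<noteq> {}
     \<and> (\<forall>t. Z t \<in> P \<rightarrow>\<^sub>M count_space S)"

definition seq_space :: "'b set \<Rightarrow> (int \<Rightarrow> 'b) measure" where
  "seq_space S = (\<Pi>\<^sub>M i\<in>(UNIV::int set). count_space S)"

definition cylinder :: "'b set \<Rightarrow> int set \<Rightarrow> (int \<Rightarrow> 'b set) \<Rightarrow> (int \<Rightarrow> 'b) set" where
  "cylinder S I A = {m \<in> space (seq_space S). \<forall>i\<in>I. m i \<in> A i}"

definition shift :: "(int \<Rightarrow> 'b) \<Rightarrow> (int \<Rightarrow> 'b)" where
  "shift m = (\<lambda>i. m (i + 1))"

text \<open>N is (the measure of) the deterministic representation of the process Z:
  it lives on the sequence space and gives each cylinder the corresponding probability.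
  (Such a measure is unique.)  The map is the left shift and Phi_0 m = m 0.\<close>
definition det_rep :: "'w measure \<Rightarrow> (int \<Rightarrow> 'w \<Rightarrow> 'b) \<Rightarrow> 'b set \<Rightarrow> (int \<Rightarrow> 'b) measure \<Rightarrow> bool" where
  "det_rep P Z S N \<longleftrightarrow> sets N = sets (seq_space S)
     \<and> (\<forall>I A. finite I \<longrightarrow> (\<forall>i\<in>I. A i \<subseteq> S) \<longrightarrow>
          emeasure N (cylinder S I A) = emeasure P {\<omega>\<in>space P. \<forall>i\<in>I. Z i \<omega> \<in> A i})"

definition bernoulli_process :: "'w measure \<Rightarrow> (int \<Rightarrow> 'w \<Rightarrow> 'b) \<Rightarrow> 'b set \<Rightarrow> bool" where
  "bernoulli_process P Z S \<longleftrightarrow> finite_process P Z S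
     \<and> (\<exists>p. \<forall>t. \<forall>s\<in>S. measure P {\<omega>\<in>space P. Z t \<omega> = s} = p s)
     \<and> prob_space.indep_vars P (\<lambda>_. count_space S) Z UNIV"

definition stationary_process :: "'w measure \<Rightarrow> (int \<Rightarrow> 'w \<Rightarrow> 'b) \<Rightarrow> 'b set \<Rightarrow> bool" where
  "stationary_process P Z S \<longleftrightarrow> finite_process P Z S
     \<and> (\<forall>I A k. finite I \<longrightarrow>
          measure P {\<omega>\<in>space P. \<forall>i\<in>I. Z (i + k) \<omega> \<in> A i}
        = measure P {\<omega>\<in>space P. \<forall>i\<in>I. Z i \<omega> \<in> A i})"

definition markov_process :: "'w measure \<Rightarrow> (int \<Rightarrow> 'w \<Rightarrow> 'b) \<Rightarrow> 'b set \<Rightarrow> bool" where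
  "markov_process P Z S \<longleftrightarrow> stationary_process P Z S
     \<and> (\<forall>t k x s. k \<le> t \<longrightarrow> s \<in> S \<longrightarrow> (\<forall>i. x i \<in> S) \<longrightarrow>
          (let C = {\<omega>\<in>space P. \<forall>i\<in>{k..t}. Z i \<omega> = x i};
               D = {\<omega>\<in>space P. Z t \<omega> = x t};
               E = {\<omega>\<in>space P. Z (t + 1) \<omega> = s}
           in measure P C > 0 \<longrightarrow>
              measure P (E \<inter> C) / measure P C = measure P (E \<inter> D) / measure P D))"

text \<open>k-step transition probability P^k(s, s') = P{Z_(n+k) = s | Z_n = s'} (taken at n = 0;
  it does not depend on n by stationarity).\<close>
definition trans_prob :: "'w measure \<Rightarrow> (int \<Rightarrow> 'w \<Rightarrow> 'b) \<Rightarrow> nat \<Rightarrow> 'b \<Rightarrow> 'b \<Rightarrow> real" where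
  "trans_prob P Z k s s' =
     measure P {\<omega>\<in>space P. Z (int k) \<omega> = s \<and> Z 0 \<omega> = s'} / measure P {\<omega>\<in>space P. Z 0 \<omega> = s'}"

definition irreducible_proc :: "'w measure \<Rightarrow> (int \<Rightarrow> 'w \<Rightarrow> 'b) \<Rightarrow> 'b set \<Rightarrow> bool" where
  "irreducible_proc P Z S \<longleftrightarrow> (\<forall>s\<in>S. \<forall>s'\<in>S. \<exists>k::nat. k \<ge> 1 \<and> trans_prob P Z k s s' > 0)"

definition aperiodic_proc :: "'w measure \<Rightarrow> (int \<Rightarrow> 'w \<Rightarrow> 'b) \<Rightarrow> 'b set \<Rightarrow> bool" where
  "aperiodic_proc P Z S \<longleftrightarrow> (\<forall>s\<in>S. Gcd {n::nat. n \<ge> 1 \<and> trans_prob P Z n s s > 0} = 1)"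

definition eps_congruent ::
  "'a measure \<Rightarrow> ('a \<Rightarrow> 'a) \<Rightarrow> ('a \<Rightarrow> 'a \<Rightarrow> real) \<Rightarrow> (int \<Rightarrow> 'a) measure \<Rightarrow> real \<Rightarrow> bool" where
  "eps_congruent M T d N \<epsilon> \<longleftrightarrow> (\<exists>\<phi>. mp_isomorphic_via M T N shift \<phi>
      \<and> (\<exists>E\<in>sets M. measure M E < \<epsilon> \<and> (\<forall>m\<in>space M - E. d m (\<phi> m 0) < \<epsilon>)))"

end

theory Submission
  imports Defs
begin

lemma space_seq: "space (seq_space S) = {x. \<forall>i. x i \<in> S}"
  by (auto simp: seq_space_def space_PiM PiE_def extensional_def)

definition fdep :: "'b set \<Rightarrow> int set \<Rightarrow> (int \<Rightarrow> 'b) set \<Rightarrow> bool" where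
 "fdep S J F \<longleftrightarrow> F \<subseteq> space (seq_space S) \<and> (\<forall>x\<in>space (seq_space S). \<forall>y\<in>space (seq_space S).
     (\<forall>i\<in>J. x i = y i) \<longrightarrow> x \<in> F \<longrightarrow> y \<in> F)"

lemma coord_meas: "(\<lambda>x. x i) \<in> seq_space S \<rightarrow>\<^sub>M count_space S"
  unfolding seq_space_def by (rule measurable_component_singleton) simp

lemma coord_pre_sets: "{x\<in>space (seq_space S). x i \<in> A} \<in> sets (seq_space S)"
proof -
  have "{x\<in>space (seq_space S). x i \<in> A} = (\<lambda>x. x i) -` (A \<inter> S) \<inter> space (seq_space S)"
    by (auto simp: space_seq)
  also have "\<dots> \<in> sets (seq_space S)" by (rule measurable_sets[OF coord_meas]) simp
  finally show ?thesis .
qed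

lemma cylpt_sets: "finite J \<Longrightarrow> {x\<in>space (seq_space S). \<forall>i\<in>J. x i = u i} \<in> sets (seq_space S)"
proof (induction J rule: finite_induct)
  case empty then show ?case by simp
next
  case (insert j J)
  have "{x\<in>space (seq_space S). \<forall>i\<in>insert j J. x i = u i}
     = {x\<in>space (seq_space S). x j \<in> {u j}} \<inter> {x\<in>space (seq_space S). \<forall>i\<in>J. x i = u i}" by auto
  also have "\<dots> \<in> sets (seq_space S)" by (rule sets.Int[OF coord_pre_sets insert.IH])
  finally show ?case .
qed

lemma fdep_sets: assumes "finite S" "finite J" "fdep S J F" shows "F \<in> sets (seq_space S)"
proof -
  let ?R = "(\<lambda>x. restrict x J) ` F"
  have fin: "finite ?R"
  proof (rule finite_subset)
    show "finite (PiE J (\<lambda>_. S))" using assms by (simp add: finite_PiE)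
    show "?R \<subseteq> PiE J (\<lambda>_. S)" using assms(3) by (auto simp: fdep_def space_seq)
  qed
  have "F = (\<Union>u\<in>?R. {x\<in>space (seq_space S). \<forall>i\<in>J. x i = u i})"
  proof
    show "F \<subseteq> (\<Union>u\<in>?R. {x\<in>space (seq_space S). \<forall>i\<in>J. x i = u i})"
      using assms(3) unfolding fdep_def by auto
    show "(\<Union>u\<in>?R. {x\<in>space (seq_space S). \<forall>i\<in>J. x i = u i}) \<subseteq> F"
    proof safe
      fix x y assume "x \<in> F" "y \<in> space (seq_space S)" "\<forall>i\<in>J. y i = restrict x J i"
      then show "y \<in> F" using assms(3) unfolding fdep_def by (metis restrict_apply' subsetD)
    qed
  qed
  also have "\<dots> \<in> sets (seq_space S)" by (rule sets.finite_UN[OF fin]) (rule cylpt_sets[OF assms(2)])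
  finally show ?thesis .
qed

lemma fdep_mono: "fdep S J F \<Longrightarrow> J \<subseteq> J' \<Longrightarrow> fdep S J' F"
  unfolding fdep_def by blast

lemma fdep_iff:
  assumes "fdep S J F" "x \<in> space (seq_space S)" "y \<in> space (seq_space S)" "\<forall>i\<in>J. x i = y i"
  shows "x \<in> F \<longleftrightarrow> y \<in> F"
proof -
  have "\<forall>i\<in>J. y i = x i" using assms(4) by simp
  then show ?thesis using assms unfolding fdep_def by blast
qed

lemma fdepI:
  assumes "F \<subseteq> space (seq_space S)"
    and "\<And>x y. x \<in> space (seq_space S) \<Longrightarrow> y \<in> space (seq_space S) \<Longrightarrow> \<forall>i\<in>J. x i = y i \<Longrightarrow> x \<in> F \<Longrightarrow> y \<in> F"
  shows "fdep S J F"
  using assms unfolding fdep_def by blast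

lemma fdep_compl: "fdep S J F \<Longrightarrow> fdep S J (space (seq_space S) - F)"
proof (rule fdepI)
  fix x y assume "fdep S J F" "x \<in> space (seq_space S)" "y \<in> space (seq_space S)" "\<forall>i\<in>J. x i = y i"
    "x \<in> space (seq_space S) - F"
  then show "y \<in> space (seq_space S) - F" using fdep_iff by blast
qed auto

lemma fdep_Int: "fdep S J F \<Longrightarrow> fdep S J G \<Longrightarrow> fdep S J (F \<inter> G)"
  unfolding fdep_def by blast

lemma fdep_Un: "fdep S J F \<Longrightarrow> fdep S J G \<Longrightarrow> fdep S J (F \<union> G)"
  unfolding fdep_def by blast

lemma fdep_Diff: "fdep S J F \<Longrightarrow> fdep S J G \<Longrightarrow> fdep S J (F - G)"
proof (rule fdepI)
  fix x y assume "fdep S J F" "fdep S J G" "x \<in> space (seq_space S)" "y \<in> space (seq_space S)" "\<forall>i\<in>J. x i = y i"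
    "x \<in> F - G"
  then show "y \<in> F - G" using fdep_iff by blast
qed (auto simp: fdep_def)

lemma fdep_empty: "fdep S J {}"
  unfolding fdep_def by blast

lemma fdep_UN: "finite K \<Longrightarrow> (\<And>k. k \<in> K \<Longrightarrow> fdep S J (F k)) \<Longrightarrow> fdep S J (\<Union>k\<in>K. F k)"
  unfolding fdep_def by blast

lemma fdep_pred: "fdep S J {x\<in>space (seq_space S). Q (restrict x J)}"
  unfolding fdep_def
proof safe
  fix x y assume "\<forall>i\<in>J. x i = y i" "Q (restrict x J)"
  moreover have "restrict x J = restrict y J" using \<open>\<forall>i\<in>J. x i = y i\<close> by (auto simp: restrict_def)
  ultimately show "Q (restrict y J)" by simp
qed

locale bsys =
  fixes P :: "'w measure" and Z :: "int \<Rightarrow> 'w \<Rightarrow> 'b" and S :: "'b set" and NB :: "(int \<Rightarrow> 'b) measure"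
  assumes bern: "bernoulli_process P Z S" and dr: "det_rep P Z S NB"
begin

definition p :: "'b \<Rightarrow> real" where "p s = measure P {\<omega>\<in>space P. Z 0 \<omega> = s}"

lemma probP: "prob_space P" using bern by (simp add: bernoulli_process_def finite_process_def)
lemma finS: "finite S" using bern by (simp add: bernoulli_process_def finite_process_def)
lemma Sne: "S \<noteq> {}" using bern by (simp add: bernoulli_process_def finite_process_def)
lemma Zmeas: "Z t \<in> P \<rightarrow>\<^sub>M count_space S" using bern by (simp add: bernoulli_process_def finite_process_def)
lemma Zin: "\<omega> \<in> space P \<Longrightarrow> Z t \<omega> \<in> S" using measurable_space[OF Zmeas] by auto

lemma sets_NB: "sets NB = sets (seq_space S)" using dr by (simp add: det_rep_def)
lemma space_NB: "space NB = space (seq_space S)" using sets_eq_imp_space_eq[OF sets_NB] .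

lemma Zpre_sets: "{\<omega>\<in>space P. Z t \<omega> \<in> A} \<in> sets P"
proof -
  have "{\<omega>\<in>space P. Z t \<omega> \<in> A} = Z t -` (A \<inter> S) \<inter> space P" using Zin by auto
  then show ?thesis using measurable_sets[OF Zmeas, of "A \<inter> S" t] by simp
qed

lemma pZ: "measure P {\<omega>\<in>space P. Z t \<omega> = s} = p s"
proof (cases "s \<in> S")
  case True
  obtain q where q: "\<forall>t. \<forall>s\<in>S. measure P {\<omega>\<in>space P. Z t \<omega> = s} = q s"
    using bern by (auto simp: bernoulli_process_def)
  then show ?thesis using True unfolding p_def by simp
next
  case False
  then have e: "{\<omega>\<in>space P. Z t \<omega> = s} = {}" "{\<omega>\<in>space P. Z 0 \<omega> = s} = {}" using Zin by auto
  show ?thesis unfolding p_def by (simp only: e)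
qed

lemma p_nonneg: "p s \<ge> 0" unfolding p_def by simp

lemma p_out: "s \<notin> S \<Longrightarrow> p s = 0"
proof -
  assume "s \<notin> S"
  then have e: "{\<omega>\<in>space P. Z 0 \<omega> = s} = {}" using Zin by auto
  show ?thesis unfolding p_def by (simp only: e measure_empty)
qed

lemma probZ_in: "measure P {\<omega>\<in>space P. Z t \<omega> \<in> A} = (\<Sum>s\<in>A\<inter>S. p s)"
proof -
  interpret prob_space P by (rule probP)
  have "{\<omega>\<in>space P. Z t \<omega> \<in> A} = (\<Union>s\<in>A\<inter>S. {\<omega>\<in>space P. Z t \<omega> = s})" using Zin by auto
  also have "measure P \<dots> = (\<Sum>s\<in>A\<inter>S. measure P {\<omega>\<in>space P. Z t \<omega> = s})"
    by (rule finite_measure_finite_Union) (auto simp: finS disjoint_family_on_def intro: Zpre_sets[of t "{_}", simplified])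
  finally show ?thesis by (simp add: pZ)
qed

lemma indep_prod:
  assumes "finite I"
  shows "measure P {\<omega>\<in>space P. \<forall>i\<in>I. Z i \<omega> \<in> A i} = (\<Prod>i\<in>I. measure P {\<omega>\<in>space P. Z i \<omega> \<in> A i})"
proof (cases "I = {}")
  case True
  interpret prob_space P by (rule probP)
  show ?thesis using True by (simp add: prob_space)
next
  case False
  interpret prob_space P by (rule probP)
  have iv: "indep_vars (\<lambda>_. count_space S) Z UNIV" using bern by (simp add: bernoulli_process_def)
  have ie: "indep_events (\<lambda>i. {\<omega>\<in>space P. Z i \<omega> \<in> A i}) UNIV"
    by (rule indep_eventsI_indep_vars[OF iv]) auto
  have "prob (\<Inter>i\<in>I. {\<omega>\<in>space P. Z i \<omega> \<in> A i}) = (\<Prod>i\<in>I. prob {\<omega>\<in>space P. Z i \<omega> \<in> A i})"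
    using ie False assms unfolding indep_events_def by blast
  moreover have "(\<Inter>i\<in>I. {\<omega>\<in>space P. Z i \<omega> \<in> A i}) = {\<omega>\<in>space P. \<forall>i\<in>I. Z i \<omega> \<in> A i}"
    using False by auto
  ultimately show ?thesis by simp
qed

lemma cyl_measure:
  assumes "finite I"
  shows "measure NB (cylinder S I A) = (\<Prod>i\<in>I. \<Sum>s\<in>A i \<inter> S. p s)"
proof -
  have eqc: "cylinder S I A = cylinder S I (\<lambda>i. A i \<inter> S)"
    by (auto simp: cylinder_def space_seq)
  have "emeasure NB (cylinder S I (\<lambda>i. A i \<inter> S)) = emeasure P {\<omega>\<in>space P. \<forall>i\<in>I. Z i \<omega> \<in> A i \<inter> S}"
    using dr assms by (simp add: det_rep_def)
  then have "measure NB (cylinder S I A) = measure P {\<omega>\<in>space P. \<forall>i\<in>I. Z i \<omega> \<in> A i \<inter> S}"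
    using eqc by (simp add: measure_def)
  also have "\<dots> = (\<Prod>i\<in>I. measure P {\<omega>\<in>space P. Z i \<omega> \<in> A i \<inter> S})" by (rule indep_prod[OF assms])
  also have "\<dots> = (\<Prod>i\<in>I. \<Sum>s\<in>A i \<inter> S. p s)"
    by (rule prod.cong[OF refl], subst probZ_in) (simp add: Int_assoc)
  finally show ?thesis .
qed

lemma probNB: "prob_space NB"
proof
  have "space NB = cylinder S {} (\<lambda>_. {})" by (simp add: cylinder_def space_NB)
  then have "emeasure NB (space NB) = emeasure P {\<omega>\<in>space P. \<forall>i\<in>{}. Z i \<omega> \<in> {}}"
    using dr by (simp add: det_rep_def)
  then show "emeasure NB (space NB) = 1" using prob_space.emeasure_space_1[OF probP] by simp
qed

lemma pt_measure:
  assumes "finite J"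
  shows "measure NB {x\<in>space NB. \<forall>i\<in>J. x i = c i} = (\<Prod>i\<in>J. p (c i))"
proof -
  have "{x\<in>space NB. \<forall>i\<in>J. x i = c i} = cylinder S J (\<lambda>i. {c i})"
    by (auto simp: cylinder_def space_NB)
  moreover have "(\<Sum>s\<in>{c i} \<inter> S. p s) = p (c i)" for i
    by (cases "c i \<in> S") (auto simp: p_out)
  ultimately show ?thesis using cyl_measure[OF assms] by simp
qed

lemma sum_p: "(\<Sum>s\<in>S. p s) = 1"
proof -
  have "{\<omega>\<in>space P. Z 0 \<omega> \<in> S} = space P" using Zin by auto
  then have "measure P {\<omega>\<in>space P. Z 0 \<omega> \<in> S} = 1"
    using prob_space.prob_space[OF probP] by simp
  then show ?thesis by (simp add: probZ_in)
qed

end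

lemma shift_k_meas: "(\<lambda>x i. x (i + k)) \<in> seq_space S \<rightarrow>\<^sub>M seq_space S"
  unfolding seq_space_def
proof (rule measurable_PiM_single'[where f="\<lambda>i x. x (i + k)"])
  fix i :: int show "(\<lambda>x. x (i + k)) \<in> PiM UNIV (\<lambda>_. count_space S) \<rightarrow>\<^sub>M count_space S"
    by (rule measurable_component_singleton) simp
next
  show "(\<lambda>\<omega> i. \<omega> (i + k)) \<in> space (PiM UNIV (\<lambda>_. count_space S)) \<rightarrow> PiE UNIV (\<lambda>i. space (count_space S))"
    by (auto simp: space_PiM PiE_iff)
qed

lemma fdep_fun:
  assumes "\<And>x y. (\<forall>l\<in>J. x l = y l) \<Longrightarrow> h x = h y"
  shows "fdep S J {x\<in>space (seq_space S). Q (h x)}"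
  unfolding fdep_def
proof safe
  fix x y assume "\<forall>l\<in>J. x l = y l" "Q (h x)"
  then show "Q (h y)" using assms[of x y] by simp
qed

context bsys begin

lemma sets_NB_PiM: "sets NB = sets (PiM UNIV (\<lambda>_. count_space S))"
  using sets_NB by (simp add: seq_space_def)

lemma prod_emb_cyl: "prod_emb UNIV (\<lambda>_. count_space S) J (PiE J A) = cylinder S J A"
  by (auto simp: prod_emb_def cylinder_def seq_space_def space_PiM PiE_iff)

lemma shift_distr: "distr NB (seq_space S) (\<lambda>x i. x (i + k)) = NB"
proof (rule measure_eqI_PiM_infinite[where I=UNIV and M="\<lambda>_. count_space S"])
  show "sets (distr NB (seq_space S) (\<lambda>x i. x (i + k))) = sets (PiM UNIV (\<lambda>_. count_space S))"
    by (simp add: seq_space_def)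
  show "sets NB = sets (PiM UNIV (\<lambda>_. count_space S))" by (rule sets_NB_PiM)
  have meas: "(\<lambda>x i. x (i + k)) \<in> NB \<rightarrow>\<^sub>M seq_space S"
    using shift_k_meas by (simp add: measurable_cong_sets[OF sets_NB refl])
  show "finite_measure (distr NB (seq_space S) (\<lambda>x i. x (i + k)))"
    by (rule prob_space.finite_measure[OF prob_space.prob_space_distr[OF probNB meas]])
  fix A J assume J: "finite J" "J \<subseteq> (UNIV::int set)" "\<And>i. i \<in> J \<Longrightarrow> A i \<in> sets (count_space S)"
  have cs: "cylinder S J A \<in> sets (seq_space S)"
  proof -
    have "cylinder S J A = prod_emb UNIV (\<lambda>_. count_space S) J (PiE J A)" by (simp add: prod_emb_cyl)
    also have "\<dots> \<in> sets (seq_space S)" unfolding seq_space_def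
      using J by (intro sets_PiM_I) auto
    finally show ?thesis .
  qed
  have pre: "(\<lambda>x i. x (i + k)) -` cylinder S J A \<inter> space NB = cylinder S ((\<lambda>i. i + k) ` J) (\<lambda>i. A (i - k))"
    by (auto simp: cylinder_def space_NB space_seq)
  have inj: "inj_on (\<lambda>i. i + k) J" by (auto simp: inj_on_def)
  have "measure NB (cylinder S ((\<lambda>i. i + k) ` J) (\<lambda>i. A (i - k))) = measure NB (cylinder S J A)"
    using J by (simp add: cyl_measure prod.reindex[OF inj])
  then have "emeasure NB (cylinder S ((\<lambda>i. i + k) ` J) (\<lambda>i. A (i - k))) = emeasure NB (cylinder S J A)"
    using finite_measure.emeasure_eq_measure[OF prob_space.finite_measure[OF probNB]] by simp
  then show "emeasure (distr NB (seq_space S) (\<lambda>x i. x (i + k))) (prod_emb UNIV (\<lambda>_. count_space S) J (PiE J A))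
        = emeasure NB (prod_emb UNIV (\<lambda>_. count_space S) J (PiE J A))"
    by (simp add: prod_emb_cyl emeasure_distr[OF meas cs] pre)
qed

lemma shift_inv:
  assumes "X \<in> sets NB"
  shows "measure NB {x\<in>space NB. (\<lambda>i. x (i + k)) \<in> X} = measure NB X"
proof -
  have meas: "(\<lambda>x i. x (i + k)) \<in> NB \<rightarrow>\<^sub>M seq_space S"
    using shift_k_meas by (simp add: measurable_cong_sets[OF sets_NB refl])
  have "measure NB X = measure (distr NB (seq_space S) (\<lambda>x i. x (i + k))) X"
    by (simp add: shift_distr)
  also have "\<dots> = measure NB ((\<lambda>x i. x (i + k)) -` X \<inter> space NB)"
    using assms sets_NB by (intro measure_distr[OF meas]) auto
  finally show ?thesis by (simp add: vimage_def Int_def conj_commute)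
qed

definition L :: "'b set" where "L = {s\<in>S. p s > 0}"
definition Supp :: "(int \<Rightarrow> 'b) set" where "Supp = {x\<in>space NB. \<forall>i. x i \<in> L}"

lemma L_sub: "L \<subseteq> S" unfolding L_def by auto
lemma finL: "finite L" using finS L_sub finite_subset by blast
lemma sum_pL: "(\<Sum>s\<in>L. p s) = 1"
proof -
  have "(\<Sum>s\<in>S. p s) = (\<Sum>s\<in>L. p s)"
  proof (rule sum.mono_neutral_right[OF finS L_sub])
    show "\<forall>i\<in>S - L. p i = 0"
    proof
      fix i assume "i \<in> S - L"
      then have "\<not> p i > 0" by (auto simp: L_def)
      then show "p i = 0" using p_nonneg[of i] by linarith
    qed
  qed
  then show ?thesis using sum_p by simp
qed
lemma L_ne: "L \<noteq> {}" using sum_pL by auto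

lemma coordNB_sets: "{x\<in>space NB. x i \<in> A} \<in> sets NB"
  using coord_pre_sets[of S i A] by (simp add: sets_NB space_NB)

lemma Supp_sets: "Supp \<in> sets NB"
proof -
  have "Supp = space NB \<inter> (\<Inter>i. {x\<in>space NB. x i \<in> L})" by (auto simp: Supp_def space_NB space_seq)
  moreover have "(\<Inter>i. {x\<in>space NB. x i \<in> L}) \<in> sets NB" using coordNB_sets by auto
  ultimately show ?thesis by auto
qed

lemma nonSupp_null: "space NB - Supp \<in> null_sets NB"
proof -
  interpret prob_space NB by (rule probNB)
  have "space NB - Supp = (\<Union>i. {x\<in>space NB. x i \<in> S - L})"
    by (auto simp: Supp_def space_NB space_seq)
  moreover have "{x\<in>space NB. x i \<in> S - L} \<in> null_sets NB" for i
  proof -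
    have "{x\<in>space NB. x i \<in> S - L} = cylinder S {i} (\<lambda>_. S - L)" by (auto simp: cylinder_def space_NB)
    then have "measure NB {x\<in>space NB. x i \<in> S - L} = (\<Sum>s\<in>(S - L) \<inter> S. p s)" by (simp add: cyl_measure)
    also have "\<dots> = 0" by (intro sum.neutral) (auto simp: L_def intro: order.antisym p_nonneg)
    finally show ?thesis using coordNB_sets by (intro null_setsI) (auto simp: emeasure_eq_measure)
  qed
  ultimately show ?thesis by auto
qed

lemma measure_Supp_Int: "X \<in> sets NB \<Longrightarrow> measure NB (X \<inter> Supp) = measure NB X"
proof -
  assume X: "X \<in> sets NB"
  have "X \<inter> Supp = X - (space NB - Supp)" using sets.sets_into_space[OF X] by auto
  then show ?thesis using measure_Diff_null_set[OF X nonSupp_null] by simp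
qed

end

locale coded = bsys P Z S NB
  for P :: "'w measure" and Z :: "int \<Rightarrow> 'w \<Rightarrow> 'b" and S :: "'b set" and NB :: "(int \<Rightarrow> 'b) measure" +
  fixes n :: nat and g :: "(int \<Rightarrow> 'b) \<Rightarrow> 'a"
  assumes g_inj: "inj_on g (PiE {-int n..int n} (\<lambda>_. {s\<in>S. measure P {\<omega>\<in>space P. Z 0 \<omega> = s} > 0}))"
begin

definition W :: "int set" where "W = {-int n..int n}"
definition B :: "(int \<Rightarrow> 'b) set" where "B = PiE W (\<lambda>_. L)"
definition blk :: "int \<Rightarrow> (int \<Rightarrow> 'b) \<Rightarrow> (int \<Rightarrow> 'b)" where "blk i x = restrict (\<lambda>j. x (i + j)) W"
definition b0 :: "int \<Rightarrow> 'b" where "b0 = (SOME w. w \<in> B)"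
definition g0 :: "(int \<Rightarrow> 'b) \<Rightarrow> 'a" where "g0 w = (if w \<in> B then g w else g b0)"
definition S' :: "'a set" where "S' = g ` B"
definition Phi :: "(int \<Rightarrow> 'b) \<Rightarrow> (int \<Rightarrow> 'a)" where "Phi x = (\<lambda>i. g0 (blk i x))"
definition N :: "(int \<Rightarrow> 'a) measure" where "N = distr NB (seq_space S') Phi"

lemma inj_gB: "inj_on g B" using g_inj by (simp add: B_def W_def L_def p_def)
lemma finW: "finite W" by (simp add: W_def)
lemma W0: "0 \<in> W" by (simp add: W_def)
lemma finB: "finite B" unfolding B_def using finW finL by (simp add: finite_PiE)
lemma B_ne: "B \<noteq> {}" unfolding B_def using L_ne by (simp add: PiE_eq_empty_iff)
lemma b0B: "b0 \<in> B" unfolding b0_def using B_ne by (simp add: some_in_eq)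
lemma finS': "finite S'" unfolding S'_def using finB by simp
lemma S'_ne: "S' \<noteq> {}" unfolding S'_def using B_ne by simp
lemma g0_in: "g0 w \<in> S'" unfolding g0_def S'_def using b0B by auto
lemma g0_B: "w \<in> B \<Longrightarrow> g0 w = g w" unfolding g0_def by simp

lemma blk_Supp: "x \<in> Supp \<Longrightarrow> blk i x \<in> B"
  unfolding blk_def B_def Supp_def by auto

lemma blk_eq: "w \<in> B \<Longrightarrow> blk i x = w \<longleftrightarrow> (\<forall>j\<in>W. x (i + j) = w j)"
  unfolding blk_def B_def by (auto simp: fun_eq_iff PiE_iff extensional_def restrict_def)

lemma blk_eq2: "blk i x = blk i y \<longleftrightarrow> (\<forall>j\<in>W. x (i + j) = y (i + j))"
  unfolding blk_def by (auto simp: fun_eq_iff restrict_def)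

lemma blk_0: "blk i x 0 = x i" unfolding blk_def using W0 by simp

lemma blk_shift: "blk i (\<lambda>l. x (l + k)) = blk (i + k) x"
  unfolding blk_def by (auto simp: fun_eq_iff restrict_def ac_simps)

lemma blk_dep: "(\<forall>l\<in>{i - int n..i + int n}. x l = y l) \<Longrightarrow> blk i x = blk i y"
  unfolding blk_eq2 W_def by auto

lemma Phi_Supp: "x \<in> Supp \<Longrightarrow> Phi x i = g (blk i x)"
  unfolding Phi_def using blk_Supp g0_B by simp

lemma Phi_space: "Phi x \<in> space (seq_space S')"
  unfolding space_seq Phi_def using g0_in by simp

lemma Phi_shift: "Phi (\<lambda>l. x (l + k)) = (\<lambda>i. Phi x (i + k))"
  unfolding Phi_def by (simp add: blk_shift)

lemma coordfun_meas: "(\<lambda>x. g0 (blk i x)) \<in> seq_space S \<rightarrow>\<^sub>M count_space S'"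
  unfolding measurable_count_space_eq2[OF finS']
proof (intro conjI ballI)
  show "(\<lambda>x. g0 (blk i x)) \<in> space (seq_space S) \<rightarrow> S'" using g0_in by simp
  fix a
  have "(\<lambda>x. g0 (blk i x)) -` {a} \<inter> space (seq_space S) = {x\<in>space (seq_space S). g0 (blk i x) = a}" by auto
  also have "\<dots> \<in> sets (seq_space S)"
  proof (rule fdep_sets[OF finS _ fdep_fun[where J="{i - int n..i + int n}" and h="\<lambda>x. g0 (blk i x)" and Q="\<lambda>v. v = a"]])
    fix x y :: "int \<Rightarrow> 'b" assume "\<forall>l\<in>{i - int n..i + int n}. x l = y l"
    then show "g0 (blk i x) = g0 (blk i y)" by (rule arg_cong[OF blk_dep])
  qed simp
  finally show "(\<lambda>x. g0 (blk i x)) -` {a} \<inter> space (seq_space S) \<in> sets (seq_space S)" .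
qed

lemma Phi_meas_seq: "Phi \<in> seq_space S \<rightarrow>\<^sub>M seq_space S'"
proof -
  have "(\<lambda>x i. g0 (blk i x)) \<in> seq_space S \<rightarrow>\<^sub>M PiM UNIV (\<lambda>_. count_space S')"
  proof (rule measurable_PiM_single'[where f="\<lambda>i x. g0 (blk i x)"])
    fix i :: int show "(\<lambda>x. g0 (blk i x)) \<in> seq_space S \<rightarrow>\<^sub>M count_space S'" by (rule coordfun_meas)
  next
    show "(\<lambda>x i. g0 (blk i x)) \<in> space (seq_space S) \<rightarrow> PiE UNIV (\<lambda>i. space (count_space S'))"
      using g0_in by (auto simp: PiE_iff)
  qed
  then show ?thesis unfolding Phi_def seq_space_def[of S'] .
qed

lemma Phi_meas: "Phi \<in> NB \<rightarrow>\<^sub>M seq_space S'"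
  using Phi_meas_seq by (simp add: measurable_cong_sets[OF sets_NB refl])

lemma sets_N: "sets N = sets (seq_space S')" unfolding N_def by simp
lemma space_N: "space N = space (seq_space S')" unfolding N_def by simp
lemma probN: "prob_space N" unfolding N_def by (rule prob_space.prob_space_distr[OF probNB Phi_meas])

lemma N_measure_space:
  assumes "Y \<in> sets (seq_space S')"
  shows "measure N Y = measure NB {x\<in>space NB. Phi x \<in> Y}"
proof -
  have "measure N Y = measure NB (Phi -` Y \<inter> space NB)" unfolding N_def
    by (rule measure_distr[OF Phi_meas assms])
  also have "Phi -` Y \<inter> space NB = {x\<in>space NB. Phi x \<in> Y}" by auto
  finally show ?thesis .
qed

lemma N_measure:
  assumes "Y \<in> sets (seq_space S')"
  shows "measure N Y = measure NB {x\<in>Supp. Phi x \<in> Y}"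
proof -
  have m: "{x\<in>space NB. Phi x \<in> Y} \<in> sets NB"
  proof -
    have "{x\<in>space NB. Phi x \<in> Y} = Phi -` Y \<inter> space NB" by auto
    then show ?thesis using measurable_sets[OF Phi_meas assms] by simp
  qed
  have "{x\<in>Supp. Phi x \<in> Y} = {x\<in>space NB. Phi x \<in> Y} \<inter> Supp" using Supp_def by auto
  then show ?thesis using N_measure_space[OF assms] measure_Supp_Int[OF m] by simp
qed

lemma seq_fdep_sets:
  assumes "finite I"
  shows "{y\<in>space (seq_space S'). \<forall>i\<in>I. y i \<in> A i} \<in> sets (seq_space S')"
proof (rule fdep_sets[OF finS' assms])
  show "fdep S' I {y\<in>space (seq_space S'). \<forall>i\<in>I. y i \<in> A i}"
    by (rule fdepI) auto
qed

lemma stationary: "stationary_process N (\<lambda>t m. m t) S'"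
  unfolding stationary_process_def finite_process_def
proof (intro conjI allI impI)
  show "prob_space N" by (rule probN)
  show "finite S'" by (rule finS')
  show "S' \<noteq> {}" by (rule S'_ne)
  fix t show "(\<lambda>m. m t) \<in> N \<rightarrow>\<^sub>M count_space S'"
    using coord_meas[of t S'] by (simp add: measurable_cong_sets[OF sets_N refl])
next
  fix I :: "int set" and A :: "int \<Rightarrow> 'a set" and k :: int
  assume I: "finite I"
  define Y0 where "Y0 = {y\<in>space (seq_space S'). \<forall>i\<in>I. y i \<in> A i}"
  define Yk where "Yk = {y\<in>space (seq_space S'). \<forall>i\<in>(\<lambda>i. i + k) ` I. y i \<in> A (i - k)}"
  have Y0s: "Y0 \<in> sets (seq_space S')" unfolding Y0_def by (rule seq_fdep_sets[OF I])
  have Yks: "Yk \<in> sets (seq_space S')" unfolding Yk_def by (rule seq_fdep_sets) (use I in simp)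
  have e1: "{\<omega>\<in>space N. \<forall>i\<in>I. \<omega> (i + k) \<in> A i} = Yk" unfolding Yk_def space_N by auto
  have e0: "{\<omega>\<in>space N. \<forall>i\<in>I. \<omega> i \<in> A i} = Y0" unfolding Y0_def space_N by auto
  have X0s: "{x\<in>space NB. Phi x \<in> Y0} \<in> sets NB"
  proof -
    have "{x\<in>space NB. Phi x \<in> Y0} = Phi -` Y0 \<inter> space NB" by auto
    then show ?thesis using measurable_sets[OF Phi_meas Y0s] by simp
  qed
  have "{x\<in>space NB. Phi x \<in> Yk} = {x\<in>space NB. (\<lambda>l. x (l + k)) \<in> {x\<in>space NB. Phi x \<in> Y0}}"
    unfolding Yk_def Y0_def using Phi_space
    by (auto simp: Phi_shift space_NB space_seq)
  then have "measure NB {x\<in>space NB. Phi x \<in> Yk} = measure NB {x\<in>space NB. Phi x \<in> Y0}"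
    using shift_inv[OF X0s, of k] by simp
  then show "measure N {\<omega>\<in>space N. \<forall>i\<in>I. \<omega> (i + k) \<in> A i} = measure N {\<omega>\<in>space N. \<forall>i\<in>I. \<omega> i \<in> A i}"
    unfolding e1 e0 using N_measure_space[OF Yks] N_measure_space[OF Y0s] by simp
qed

end

context coded begin

lemma blk_app: "j \<in> W \<Longrightarrow> blk i x j = x (i + j)" unfolding blk_def by simp

definition G :: "int set \<Rightarrow> (int \<Rightarrow> int \<Rightarrow> 'b) \<Rightarrow> (int \<Rightarrow> 'b) set" where
  "G I w = {x\<in>space NB. \<forall>i\<in>I. blk i x = w i}"

lemma G_sets:
  assumes "finite I"
  shows "G I w \<in> sets NB"
proof -
  let ?J = "\<Union>i\<in>I. {i - int n..i + int n}"
  have fd: "fdep S ?J (G I w)"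
  proof (rule fdepI)
    show "G I w \<subseteq> space (seq_space S)" unfolding G_def space_NB by auto
    fix x y assume xy: "x \<in> space (seq_space S)" "y \<in> space (seq_space S)" "\<forall>i\<in>?J. x i = y i" "x \<in> G I w"
    have "blk i y = w i" if "i \<in> I" for i
    proof -
      have "blk i x = blk i y" by (rule blk_dep) (use xy(3) that in auto)
      then show ?thesis using xy(4) that unfolding G_def by auto
    qed
    then show "y \<in> G I w" unfolding G_def space_NB using xy(2) by auto
  qed
  then have "G I w \<in> sets (seq_space S)" using fdep_sets[OF finS _ fd] assms by auto
  then show ?thesis by (simp add: sets_NB)
qed

lemma G_cyl:
  assumes kt: "k \<le> t" and x0: "x0 \<in> G {k..t} w"
  shows "G {k..t} w = {x\<in>space NB. \<forall>l\<in>{k - int n..t + int n}. x l = x0 l}"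
proof
  show "G {k..t} w \<subseteq> {x\<in>space NB. \<forall>l\<in>{k - int n..t + int n}. x l = x0 l}"
  proof safe
    fix x assume x: "x \<in> G {k..t} w"
    then show "x \<in> space NB" unfolding G_def by auto
    fix l assume l: "l \<in> {k - int n..t + int n}"
    define i where "i = max k (min t l)"
    have i: "i \<in> {k..t}" using kt unfolding i_def by auto
    have j: "l - i \<in> W" using l kt unfolding i_def W_def by auto
    have "blk i x = blk i x0" using x x0 i unfolding G_def by auto
    then have "x (i + (l - i)) = x0 (i + (l - i))" using j unfolding blk_eq2 by blast
    then show "x l = x0 l" by simp
  qed
next
  show "{x\<in>space NB. \<forall>l\<in>{k - int n..t + int n}. x l = x0 l} \<subseteq> G {k..t} w"
  proof safe
    fix x assume x: "x \<in> space NB" "\<forall>l\<in>{k - int n..t + int n}. x l = x0 l"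
    have "blk i x = w i" if i: "i \<in> {k..t}" for i
    proof -
      have "blk i x = blk i x0" by (rule blk_dep) (use x(2) i in auto)
      then show ?thesis using x0 i unfolding G_def by auto
    qed
    then show "x \<in> G {k..t} w" unfolding G_def using x(1) by auto
  qed
qed

lemma G_ext: "G {k..t + 1} (w(t + 1 := v)) = G {k..t} w \<inter> {x\<in>space NB. blk (t + 1) x = v}" if "k \<le> t"
  unfolding G_def using that by auto

lemma markov_core:
  assumes kt: "k \<le> t" and v: "v \<in> B"
  shows "measure NB (G {k..t + 1} (w(t + 1 := v)))
       = measure NB (G {k..t} w) * (if (\<forall>j\<in>W. j + 1 \<in> W \<longrightarrow> v j = w t (j + 1)) then p (v (int n)) else 0)"
proof (cases "G {k..t} w = {}")
  case True
  then show ?thesis using G_ext[OF kt] by simp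
next
  case False
  then obtain x0 where x0: "x0 \<in> G {k..t} w" by auto
  show ?thesis
  proof (cases "\<forall>j\<in>W. j + 1 \<in> W \<longrightarrow> v j = w t (j + 1)")
    case nc: False
    then obtain j where j: "j \<in> W" "j + 1 \<in> W" "v j \<noteq> w t (j + 1)" by auto
    have "G {k..t + 1} (w(t + 1 := v)) = {}"
    proof (rule ccontr)
      assume "G {k..t + 1} (w(t + 1 := v)) \<noteq> {}"
      then obtain x where x: "x \<in> G {k..t} w" "blk (t + 1) x = v" using G_ext[OF kt] by auto
      have "blk t x = w t" using x(1) kt unfolding G_def by auto
      then have "x (t + (j + 1)) = w t (j + 1)" using blk_app[OF j(2), of t x] by simp
      moreover have "x (t + 1 + j) = v j" using x(2) blk_app[OF j(1), of "t + 1" x] by simp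
      ultimately show False using j(3) by (simp add: ac_simps)
    qed
    then show ?thesis using nc by (simp only: if_not_P[OF nc]) simp
  next
    case True
    let ?J = "{k - int n..t + int n}"
    define c where "c = x0(t + int n + 1 := v (int n))"
    have nW: "int n \<in> W" unfolding W_def by simp
    have eqG: "G {k..t + 1} (w(t + 1 := v)) = {x\<in>space NB. \<forall>l\<in>insert (t + int n + 1) ?J. x l = c l}"
    proof -
      have "G {k..t + 1} (w(t + 1 := v)) = G {k..t} w \<inter> {x\<in>space NB. blk (t + 1) x = v}" by (rule G_ext[OF kt])
      also have "\<dots> = {x\<in>space NB. \<forall>l\<in>insert (t + int n + 1) ?J. x l = c l}"
      proof (intro set_eqI iffI)
        fix x assume "x \<in> G {k..t} w \<inter> {x\<in>space NB. blk (t + 1) x = v}"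
        then have x: "x \<in> G {k..t} w" "blk (t + 1) x = v" by auto
        have sp: "x \<in> space NB" using x(1) unfolding G_def by auto
        have "x l = c l" if l: "l \<in> insert (t + int n + 1) ?J" for l
        proof (cases "l = t + int n + 1")
          case True
          have "x (t + 1 + int n) = v (int n)" using x(2) blk_app[OF nW, of "t + 1" x] by simp
          then show ?thesis using True unfolding c_def by (simp add: ac_simps)
        next
          case False
          then have "l \<in> ?J" using l by auto
          then have "x l = x0 l" using G_cyl[OF kt x0] x(1) by auto
          then show ?thesis using False unfolding c_def by simp
        qed
        then show "x \<in> {x\<in>space NB. \<forall>l\<in>insert (t + int n + 1) ?J. x l = c l}" using sp by auto
      next
        fix x assume "x \<in> {x\<in>space NB. \<forall>l\<in>insert (t + int n + 1) ?J. x l = c l}"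
        then have x: "x \<in> space NB" "\<forall>l\<in>insert (t + int n + 1) ?J. x l = c l" by auto
        have xJ: "\<forall>l\<in>?J. x l = x0 l" using x(2) unfolding c_def by auto
        then have xG: "x \<in> G {k..t} w" using G_cyl[OF kt x0] x(1) by auto
        have bt: "blk t x = w t" using xG kt unfolding G_def by auto
        have "blk (t + 1) x = v" unfolding blk_eq[OF v]
        proof
          fix j assume j: "j \<in> W"
          show "x (t + 1 + j) = v j"
          proof (cases "j = int n")
            case True
            then show ?thesis using x(2) unfolding c_def by (simp add: ac_simps)
          next
            case False
            then have j1: "j + 1 \<in> W" using j unfolding W_def by auto
            have "x (t + (j + 1)) = w t (j + 1)" using bt blk_app[OF j1, of t x] by simp
            then show ?thesis using True j j1 by (simp add: ac_simps)
          qed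
        qed
        then show "x \<in> G {k..t} w \<inter> {x\<in>space NB. blk (t + 1) x = v}" using xG x(1) by auto
      qed
      finally show ?thesis .
    qed
    have notin: "t + int n + 1 \<notin> ?J" by simp
    have "measure NB (G {k..t + 1} (w(t + 1 := v))) = (\<Prod>l\<in>insert (t + int n + 1) ?J. p (c l))"
      unfolding eqG by (rule pt_measure) simp
    also have "\<dots> = p (c (t + int n + 1)) * (\<Prod>l\<in>?J. p (c l))" using notin by (simp add: prod.insert)
    also have "(\<Prod>l\<in>?J. p (c l)) = (\<Prod>l\<in>?J. p (x0 l))" unfolding c_def by (intro prod.cong) auto
    also have "\<dots> = measure NB (G {k..t} w)" using G_cyl[OF kt x0] pt_measure[of ?J x0] by simp
    finally have eq: "measure NB (G {k..t + 1} (w(t + 1 := v))) = p (c (t + int n + 1)) * measure NB (G {k..t} w)" .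
    have cv: "c (t + int n + 1) = v (int n)" by (simp add: c_def)
    show ?thesis unfolding if_P[OF True] eq cv by (rule mult.commute)
  qed
qed

lemma inv_g: "s \<in> S' \<Longrightarrow> inv_into B g s \<in> B \<and> g (inv_into B g s) = s"
  unfolding S'_def by (simp add: inv_into_into f_inv_into_f)

lemma N_G:
  assumes "finite I" "\<forall>i\<in>I. w i \<in> B"
  shows "measure N {\<omega>\<in>space N. \<forall>i\<in>I. \<omega> i = g (w i)} = measure NB (G I w)"
proof -
  have Ys: "{\<omega>\<in>space N. \<forall>i\<in>I. \<omega> i = g (w i)} \<in> sets (seq_space S')"
    using seq_fdep_sets[OF assms(1), of "\<lambda>i. {g (w i)}"] by (simp add: space_N)
  have "{x\<in>Supp. Phi x \<in> {\<omega>\<in>space N. \<forall>i\<in>I. \<omega> i = g (w i)}} = G I w \<inter> Supp"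
  proof -
    have "x \<in> Supp \<Longrightarrow> (g (blk i x) = g (w i)) = (blk i x = w i)" if "i \<in> I" for x i
      using inj_gB blk_Supp assms(2) that by (auto dest: inj_onD)
    then show ?thesis unfolding G_def using Phi_space
      by (auto simp: Phi_Supp space_N Supp_def)
  qed
  then show ?thesis using N_measure[OF Ys] measure_Supp_Int[OF G_sets[OF assms(1)]] by simp
qed

lemma markov: "markov_process N (\<lambda>t m. m t) S'"
  unfolding markov_process_def Let_def
proof (intro conjI allI impI)
  show "stationary_process N (\<lambda>t m. m t) S'" by (rule stationary)
  fix t k :: int and x :: "int \<Rightarrow> 'a" and s
  assume kt: "k \<le> t" and s: "s \<in> S'" and xs: "\<forall>i. x i \<in> S'"
  define w where "w i = inv_into B g (x i)" for i
  define v where "v = inv_into B g s"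
  have wB: "w i \<in> B" and gw: "g (w i) = x i" for i using inv_g xs unfolding w_def by auto
  have vB: "v \<in> B" and gv: "g v = s" using inv_g s unfolding v_def by auto
  define q where "q = (if (\<forall>j\<in>W. j + 1 \<in> W \<longrightarrow> v j = w t (j + 1)) then p (v (int n)) else 0)"
  have wv: "\<forall>i\<in>I. (w(t + 1 := v)) i \<in> B" for I using wB vB by auto
  have gwv: "g ((w(t + 1 := v)) i) = (x(t + 1 := s)) i" for i using gw gv by simp
  have C: "{\<omega>\<in>space N. \<forall>i\<in>{k..t}. \<omega> i = x i} = {\<omega>\<in>space N. \<forall>i\<in>{k..t}. \<omega> i = g (w i)}" using gw by simp
  have D: "{\<omega>\<in>space N. \<omega> t = x t} = {\<omega>\<in>space N. \<forall>i\<in>{t..t}. \<omega> i = g (w i)}" using gw by simp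
  have EC: "{\<omega>\<in>space N. \<omega> (t + 1) = s} \<inter> {\<omega>\<in>space N. \<forall>i\<in>{k..t}. \<omega> i = x i}
      = {\<omega>\<in>space N. \<forall>i\<in>{k..t + 1}. \<omega> i = g ((w(t + 1 := v)) i)}"
    unfolding gwv using kt by (auto simp: le_less)
  have ED: "{\<omega>\<in>space N. \<omega> (t + 1) = s} \<inter> {\<omega>\<in>space N. \<omega> t = x t}
      = {\<omega>\<in>space N. \<forall>i\<in>{t..t + 1}. \<omega> i = g ((w(t + 1 := v)) i)}"
    unfolding gwv by (auto simp: le_less)
  have mC: "measure N {\<omega>\<in>space N. \<forall>i\<in>{k..t}. \<omega> i = x i} = measure NB (G {k..t} w)"
    unfolding C by (rule N_G) (use wB in auto)
  have mD: "measure N {\<omega>\<in>space N. \<omega> t = x t} = measure NB (G {t..t} w)"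
    unfolding D by (rule N_G) (use wB in auto)
  have mEC: "measure N ({\<omega>\<in>space N. \<omega> (t + 1) = s} \<inter> {\<omega>\<in>space N. \<forall>i\<in>{k..t}. \<omega> i = x i})
      = measure NB (G {k..t} w) * q"
    unfolding EC
  proof -
    have "measure N {\<omega>\<in>space N. \<forall>i\<in>{k..t + 1}. \<omega> i = g ((w(t + 1 := v)) i)}
        = measure NB (G {k..t + 1} (w(t + 1 := v)))" by (rule N_G[OF _ wv]) simp
    also have "\<dots> = measure NB (G {k..t} w) * q" unfolding q_def by (rule markov_core[OF kt vB])
    finally show "measure N {\<omega>\<in>space N. \<forall>i\<in>{k..t + 1}. \<omega> i = g ((w(t + 1 := v)) i)}
        = measure NB (G {k..t} w) * q" .
  qed
  have mED: "measure N ({\<omega>\<in>space N. \<omega> (t + 1) = s} \<inter> {\<omega>\<in>space N. \<omega> t = x t})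
      = measure NB (G {t..t} w) * q"
    unfolding ED
  proof -
    have "measure N {\<omega>\<in>space N. \<forall>i\<in>{t..t + 1}. \<omega> i = g ((w(t + 1 := v)) i)}
        = measure NB (G {t..t + 1} (w(t + 1 := v)))" by (rule N_G[OF _ wv]) simp
    also have "\<dots> = measure NB (G {t..t} w) * q" unfolding q_def by (rule markov_core[OF _ vB]) simp
    finally show "measure N {\<omega>\<in>space N. \<forall>i\<in>{t..t + 1}. \<omega> i = g ((w(t + 1 := v)) i)}
        = measure NB (G {t..t} w) * q" .
  qed
  assume pos: "0 < measure N {\<omega>\<in>space N. \<forall>i\<in>{k..t}. \<omega> i = x i}"
  have sub: "G {k..t} w \<subseteq> G {t..t} w" unfolding G_def using kt by auto
  have "measure NB (G {k..t} w) \<le> measure NB (G {t..t} w)"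
    using sub G_sets[of "{t..t}" w] by (intro finite_measure.finite_measure_mono[OF prob_space.finite_measure[OF probNB]]) auto
  then have posD: "measure NB (G {t..t} w) > 0" using pos mC by simp
  show "measure N ({\<omega>\<in>space N. \<omega> (t + 1) = s} \<inter> {\<omega>\<in>space N. \<forall>i\<in>{k..t}. \<omega> i = x i}) /
          measure N {\<omega>\<in>space N. \<forall>i\<in>{k..t}. \<omega> i = x i} =
        measure N ({\<omega>\<in>space N. \<omega> (t + 1) = s} \<inter> {\<omega>\<in>space N. \<omega> t = x t}) /
          measure N {\<omega>\<in>space N. \<omega> t = x t}"
    unfolding mEC mED mC mD using pos posD mC by simp
qed

end

context coded begin

lemma pair_pos:
  assumes v: "v \<in> B" and v': "v' \<in> B" and m: "2 * int n < m"
  shows "measure NB (G {0, m} (\<lambda>i. if i = 0 then v' else v)) > 0"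
proof -
  let ?J = "{- int n..int n} \<union> {m - int n..m + int n}"
  define c where "c l = (if l \<le> int n then v' l else v (l - m))" for l
  have m0: "m \<noteq> 0" using m by simp
  have eq: "G {0, m} (\<lambda>i. if i = 0 then v' else v) = {x\<in>space NB. \<forall>l\<in>?J. x l = c l}"
  proof (intro set_eqI iffI)
    fix x assume "x \<in> G {0, m} (\<lambda>i. if i = 0 then v' else v)"
    then have x: "x \<in> space NB" "blk 0 x = v'" "blk m x = v" unfolding G_def using m0 by auto
    have "x l = c l" if l: "l \<in> ?J" for l
    proof (cases "l \<le> int n")
      case True
      then have "l \<in> W" using l m unfolding W_def by auto
      then show ?thesis using x(2) blk_app[of l 0 x] True unfolding c_def by simp
    next
      case False
      then have "l - m \<in> W" using l m unfolding W_def by auto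
      then show ?thesis using x(3) blk_app[of "l - m" m x] False unfolding c_def by simp
    qed
    then show "x \<in> {x\<in>space NB. \<forall>l\<in>?J. x l = c l}" using x(1) by auto
  next
    fix x assume "x \<in> {x\<in>space NB. \<forall>l\<in>?J. x l = c l}"
    then have x: "x \<in> space NB" "\<forall>l\<in>?J. x l = c l" by auto
    have "blk 0 x = v'" unfolding blk_eq[OF v']
    proof
      fix j assume "j \<in> W" then show "x (0 + j) = v' j" using x(2) unfolding c_def W_def by auto
    qed
    moreover have "blk m x = v" unfolding blk_eq[OF v]
    proof
      fix j assume j: "j \<in> W"
      then have "m + j \<in> ?J" "\<not> m + j \<le> int n" using m unfolding W_def by auto
      then show "x (m + j) = v j" using x(2) unfolding c_def by auto
    qed
    ultimately show "x \<in> G {0, m} (\<lambda>i. if i = 0 then v' else v)" unfolding G_def using x(1) m0 by auto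
  qed
  have cL: "c l \<in> L" if l: "l \<in> ?J" for l
  proof (cases "l \<le> int n")
    case True
    then have "l \<in> W" using l m unfolding W_def by auto
    then show ?thesis using v' True unfolding c_def B_def by auto
  next
    case False
    then have "l - m \<in> W" using l m unfolding W_def by auto
    then show ?thesis using v False unfolding c_def B_def by auto
  qed
  have "(\<Prod>l\<in>?J. p (c l)) > 0" using cL by (intro prod_pos) (auto simp: L_def)
  then show ?thesis unfolding eq by (simp add: pt_measure)
qed

lemma trans_pos:
  assumes s: "s \<in> S'" and s': "s' \<in> S'" and m: "2 * int n < int m"
  shows "trans_prob N (\<lambda>t m. m t) m s s' > 0"
proof -
  interpret N: prob_space N by (rule probN)
  define v where "v = inv_into B g s"
  define v' where "v' = inv_into B g s'"
  have vB: "v \<in> B" and gv: "g v = s" using inv_g s unfolding v_def by auto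
  have vB': "v' \<in> B" and gv': "g v' = s'" using inv_g s' unfolding v'_def by auto
  define w where "w = (\<lambda>i::int. if i = 0 then v' else v)"
  have m0: "int m \<noteq> 0" using m by simp
  have num: "{\<omega>\<in>space N. \<omega> (int m) = s \<and> \<omega> 0 = s'} = {\<omega>\<in>space N. \<forall>i\<in>{0, int m}. \<omega> i = g (w i)}"
    unfolding w_def using gv gv' m0 by auto
  have "measure N {\<omega>\<in>space N. \<forall>i\<in>{0, int m}. \<omega> i = g (w i)} = measure NB (G {0, int m} w)"
    by (rule N_G) (use vB vB' in \<open>auto simp: w_def\<close>)
  also have "\<dots> > 0" unfolding w_def by (rule pair_pos[OF vB vB' m])
  finally have pnum: "measure N {\<omega>\<in>space N. \<omega> (int m) = s \<and> \<omega> 0 = s'} > 0" unfolding num .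
  have "{\<omega>\<in>space N. \<omega> 0 = s'} \<in> sets N"
    using seq_fdep_sets[of "{0}" "\<lambda>_. {s'}"] by (simp add: sets_N space_N)
  then have "measure N {\<omega>\<in>space N. \<omega> (int m) = s \<and> \<omega> 0 = s'} \<le> measure N {\<omega>\<in>space N. \<omega> 0 = s'}"
    by (intro N.finite_measure_mono) auto
  then show ?thesis unfolding trans_prob_def using pnum by simp
qed

lemma irreducible: "irreducible_proc N (\<lambda>t m. m t) S'"
  unfolding irreducible_proc_def
proof (intro ballI)
  fix s s' assume "s \<in> S'" "s' \<in> S'"
  then show "\<exists>k. 1 \<le> k \<and> 0 < trans_prob N (\<lambda>t m. m t) k s s'"
    by (intro exI[of _ "2 * n + 1"]) (auto intro!: trans_pos)
qed

lemma aperiodic: "aperiodic_proc N (\<lambda>t m. m t) S'"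
  unfolding aperiodic_proc_def
proof (intro ballI)
  fix s assume s: "s \<in> S'"
  let ?A = "{m. 1 \<le> m \<and> 0 < trans_prob N (\<lambda>t m. m t) m s s}"
  have a1: "2 * n + 1 \<in> ?A" using s by (auto intro!: trans_pos)
  have a2: "2 * n + 2 \<in> ?A" using s by (auto intro!: trans_pos)
  have g1: "Gcd ?A dvd 2 * n + 1" using a1 by (rule Gcd_dvd)
  have g2: "Gcd ?A dvd 2 * n + 2" using a2 by (rule Gcd_dvd)
  have "Gcd ?A dvd (2 * n + 2) - (2 * n + 1)" by (rule dvd_diff_nat[OF g2 g1])
  then show "Gcd ?A = 1" by simp
qed

end

context coded begin

definition Psi :: "(int \<Rightarrow> 'a) \<Rightarrow> (int \<Rightarrow> 'b)" where "Psi y = (\<lambda>i. inv_into B g (y i) 0)"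

lemma Psi_Phi: "x \<in> Supp \<Longrightarrow> Psi (Phi x) = x"
  unfolding Psi_def by (auto simp: fun_eq_iff Phi_Supp blk_Supp inj_gB blk_0)

lemma Phi_inj: "inj_on Phi Supp"
  by (rule inj_on_inverseI[where g=Psi]) (rule Psi_Phi)

lemma Psi_meas: "Psi \<in> seq_space S' \<rightarrow>\<^sub>M seq_space S"
proof -
  have "(\<lambda>y i. inv_into B g (y i) 0) \<in> seq_space S' \<rightarrow>\<^sub>M PiM UNIV (\<lambda>_. count_space S)"
  proof (rule measurable_PiM_single'[where f="\<lambda>i y. inv_into B g (y i) 0"])
    fix i :: int
    have f: "(\<lambda>a. inv_into B g a 0) \<in> count_space S' \<rightarrow>\<^sub>M count_space S"
      using inv_g W0 L_sub unfolding measurable_count_space_eq1 B_def by (auto simp: PiE_iff)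
    show "(\<lambda>y. inv_into B g (y i) 0) \<in> seq_space S' \<rightarrow>\<^sub>M count_space S"
      by (rule measurable_compose[OF coord_meas f])
  next
    show "(\<lambda>y i. inv_into B g (y i) 0) \<in> space (seq_space S') \<rightarrow> PiE UNIV (\<lambda>i. space (count_space S))"
      using inv_g W0 L_sub unfolding B_def by (auto simp: PiE_iff space_seq)
  qed
  then show ?thesis unfolding Psi_def seq_space_def[of S] .
qed

lemma fix_sets: "{y\<in>space (seq_space S'). Phi (Psi y) = y} \<in> sets (seq_space S')"
proof -
  have one: "{y\<in>space (seq_space S'). g0 (blk i (Psi y)) = y i} \<in> sets (seq_space S')" for i
  proof -
    have "fdep S' {i - int n..i + int n} {y\<in>space (seq_space S'). g0 (blk i (Psi y)) = y i}"
    proof (rule fdepI)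
      fix x y :: "int \<Rightarrow> 'a" assume xy: "\<forall>l\<in>{i - int n..i + int n}. x l = y l"
        and "x \<in> {y\<in>space (seq_space S'). g0 (blk i (Psi y)) = y i}" "y \<in> space (seq_space S')"
      moreover have "blk i (Psi x) = blk i (Psi y)" by (rule blk_dep) (use xy in \<open>auto simp: Psi_def\<close>)
      moreover have "x i = y i" using xy by auto
      ultimately show "y \<in> {y\<in>space (seq_space S'). g0 (blk i (Psi y)) = y i}" by simp
    qed auto
    then show ?thesis by (rule fdep_sets[OF finS', rotated]) simp
  qed
  have "{y\<in>space (seq_space S'). Phi (Psi y) = y} = space (seq_space S') \<inter> (\<Inter>i. {y\<in>space (seq_space S'). g0 (blk i (Psi y)) = y i})"
    by (auto simp: Phi_def fun_eq_iff)
  also have "\<dots> \<in> sets (seq_space S')" using one by auto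
  finally show ?thesis .
qed

lemma img_Phi:
  assumes X: "X \<in> sets NB" "X \<subseteq> Supp"
  shows "Phi ` X \<in> sets (seq_space S')"
proof -
  have "Phi ` X = {y\<in>space (seq_space S'). Phi (Psi y) = y} \<inter> (Psi -` X \<inter> space (seq_space S'))"
  proof (intro set_eqI iffI)
    fix y assume "y \<in> Phi ` X"
    then obtain x where x: "x \<in> X" "y = Phi x" by auto
    have "Psi y = x" using x X(2) Psi_Phi by auto
    then show "y \<in> {y\<in>space (seq_space S'). Phi (Psi y) = y} \<inter> (Psi -` X \<inter> space (seq_space S'))"
      using x Phi_space by auto
  next
    fix y assume "y \<in> {y\<in>space (seq_space S'). Phi (Psi y) = y} \<inter> (Psi -` X \<inter> space (seq_space S'))"
    then have "Phi (Psi y) = y" "Psi y \<in> X" by auto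
    then show "y \<in> Phi ` X" by (metis image_eqI)
  qed
  also have "\<dots> \<in> sets (seq_space S')"
    using fix_sets measurable_sets[OF Psi_meas, of X] X(1) sets_NB by auto
  finally show ?thesis .
qed

lemma Supp_shift: "x \<in> Supp \<Longrightarrow> shift x \<in> Supp"
  unfolding Supp_def shift_def by (auto simp: space_NB space_seq)

lemma Phi_shift1: "Phi (shift x) = shift (Phi x)"
  using Phi_shift[of x 1] unfolding shift_def by simp

lemma preimg_Phi_img:
  assumes "X \<subseteq> Supp"
  shows "Phi -` (Phi ` X) \<inter> space NB \<inter> Supp = X"
  using assms Phi_inj Supp_def by (auto dest: inj_onD)

end

locale full = coded P Z S NB n g
  for P :: "'w measure" and Z :: "int \<Rightarrow> 'w \<Rightarrow> 'b" and S :: "'b set" and NB :: "(int \<Rightarrow> 'b) measure"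
    and n :: nat and g :: "(int \<Rightarrow> 'b) \<Rightarrow> 'a" +
  fixes M :: "'a measure" and T :: "'a \<Rightarrow> 'a" and psi :: "'a \<Rightarrow> int \<Rightarrow> 'b" and H1 H2
  assumes probM: "prob_space M"
    and H1: "H1 \<in> sets M" and H2: "H2 \<in> sets NB"
    and H1null: "emeasure M (space M - H1) = 0" and H2null: "emeasure NB (space NB - H2) = 0"
    and TH1: "T ` H1 \<subseteq> H1"
    and bij: "bij_betw psi H1 H2"
    and img: "\<forall>A\<in>sets M. A \<subseteq> H1 \<longrightarrow> psi ` A \<in> sets NB"
    and pre: "\<forall>B\<in>sets NB. B \<subseteq> H2 \<longrightarrow> {x\<in>H1. psi x \<in> B} \<in> sets M"
    and meas: "\<forall>A\<in>sets M. A \<subseteq> H1 \<longrightarrow> emeasure NB (psi ` A) = emeasure M A"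
    and comm: "\<forall>x\<in>H1. psi (T x) = shift (psi x)"
begin

lemma psiH2: "x \<in> H1 \<Longrightarrow> psi x \<in> H2" using bij by (auto simp: bij_betw_def)
lemma psi_inj: "inj_on psi H1" using bij by (auto simp: bij_betw_def)
lemma psi_img: "psi ` H1 = H2" using bij by (auto simp: bij_betw_def)

lemma finM: "finite_measure M" using probM by (rule prob_space.finite_measure)
lemma finNB: "finite_measure NB" using probNB by (rule prob_space.finite_measure)

lemma measure_H2_Int: "X \<in> sets NB \<Longrightarrow> measure NB (X \<inter> H2) = measure NB X"
proof -
  assume X: "X \<in> sets NB"
  have nul: "space NB - H2 \<in> null_sets NB" using H2 H2null by auto
  have "X \<inter> H2 = X - (space NB - H2)" using sets.sets_into_space[OF X] by auto
  then show ?thesis using measure_Diff_null_set[OF X nul] by simp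
qed

lemma I1:
  assumes X: "X \<in> sets NB"
  shows "{m\<in>H1. psi m \<in> X} \<in> sets M" and "measure M {m\<in>H1. psi m \<in> X} = measure NB X"
proof -
  have e: "{m\<in>H1. psi m \<in> X} = {m\<in>H1. psi m \<in> X \<inter> H2}" using psiH2 by auto
  have XH: "X \<inter> H2 \<in> sets NB" using X H2 by auto
  show s: "{m\<in>H1. psi m \<in> X} \<in> sets M" unfolding e using pre XH by auto
  have im: "psi ` {m\<in>H1. psi m \<in> X} = X \<inter> H2" using psi_img psiH2 by auto
  have "emeasure NB (X \<inter> H2) = emeasure M {m\<in>H1. psi m \<in> X}" using meas s im by (metis (no_types, lifting) mem_Collect_eq subsetI)
  then have "measure NB (X \<inter> H2) = measure M {m\<in>H1. psi m \<in> X}" by (simp add: measure_def)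
  then show "measure M {m\<in>H1. psi m \<in> X} = measure NB X" using measure_H2_Int[OF X] by simp
qed

definition H1' where "H1' = {m\<in>H1. psi m \<in> Supp}"
definition phi where "phi m = Phi (psi m)"

lemma H1'_sets: "H1' \<in> sets M" unfolding H1'_def by (rule I1(1)[OF Supp_sets])

lemma H1'_null: "space M - H1' \<in> null_sets M"
proof -
  have a: "space M - H1 \<in> null_sets M" using H1 H1null by auto
  have "measure M {m\<in>H1. psi m \<in> space NB - Supp} = 0"
    using I1(2)[of "space NB - Supp"] Supp_sets nonSupp_null by (auto simp: null_sets_def measure_def)
  then have b: "{m\<in>H1. psi m \<in> space NB - Supp} \<in> null_sets M"
    using I1(1)[of "space NB - Supp"] Supp_sets
    by (intro null_setsI) (auto simp: finite_measure.emeasure_eq_measure[OF finM])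
  have "space M - H1' \<subseteq> (space M - H1) \<union> {m\<in>H1. psi m \<in> space NB - Supp}"
    unfolding H1'_def using psiH2 sets.sets_into_space[OF H2] by auto
  moreover have "space M - H1' \<in> sets M" using H1'_sets by auto
  ultimately show ?thesis using a b by (meson null_sets.Un null_sets_subset)
qed

end

context full begin

lemma psi_H1'_sub: "A \<subseteq> H1' \<Longrightarrow> psi ` A \<subseteq> Supp" unfolding H1'_def by auto

lemma phi_img_sets: "A \<in> sets M \<Longrightarrow> A \<subseteq> H1' \<Longrightarrow> phi ` A \<in> sets N"
proof -
  assume A: "A \<in> sets M" "A \<subseteq> H1'"
  have "psi ` A \<in> sets NB" using img A unfolding H1'_def by auto
  then have "Phi ` (psi ` A) \<in> sets (seq_space S')" using img_Phi psi_H1'_sub[OF A(2)] by auto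
  moreover have "phi ` A = Phi ` (psi ` A)" unfolding phi_def by auto
  ultimately show ?thesis by (simp add: sets_N)
qed

lemma phi_measure: "A \<in> sets M \<Longrightarrow> A \<subseteq> H1' \<Longrightarrow> emeasure N (phi ` A) = emeasure M A"
proof -
  assume A: "A \<in> sets M" "A \<subseteq> H1'"
  have XA: "psi ` A \<in> sets NB" using img A unfolding H1'_def by auto
  have XS: "psi ` A \<subseteq> Supp" by (rule psi_H1'_sub[OF A(2)])
  have pi: "phi ` A = Phi ` (psi ` A)" unfolding phi_def by auto
  have ims: "Phi ` (psi ` A) \<in> sets (seq_space S')" using img_Phi[OF XA XS] .
  have "measure N (phi ` A) = measure NB (Phi -` (Phi ` (psi ` A)) \<inter> space NB)"
    unfolding pi N_def by (rule measure_distr[OF Phi_meas ims])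
  also have "\<dots> = measure NB (Phi -` (Phi ` (psi ` A)) \<inter> space NB \<inter> Supp)"
    by (rule measure_Supp_Int[symmetric]) (rule measurable_sets[OF Phi_meas ims])
  also have "\<dots> = measure NB (psi ` A)" by (simp add: preimg_Phi_img[OF XS])
  also have "\<dots> = measure M A" using meas A unfolding H1'_def by (auto simp: measure_def)
  finally have "measure N (phi ` A) = measure M A" .
  then show ?thesis
    using finite_measure.emeasure_eq_measure[OF finM] finite_measure.emeasure_eq_measure[OF prob_space.finite_measure[OF probN]]
    by simp
qed

lemma phi_T: "x \<in> H1' \<Longrightarrow> phi (T x) = shift (phi x)"
  unfolding phi_def H1'_def using comm by (auto simp: Phi_shift1)

lemma T_H1': "T ` H1' \<subseteq> H1'"
  unfolding H1'_def using TH1 comm Supp_shift by auto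

lemma phi_inj: "inj_on phi H1'"
proof (rule inj_onI)
  fix x y assume xy: "x \<in> H1'" "y \<in> H1'" "phi x = phi y"
  then have "psi x = psi y" unfolding phi_def H1'_def using Phi_inj by (auto dest: inj_onD)
  then show "x = y" using xy psi_inj unfolding H1'_def by (auto dest: inj_onD)
qed

lemma iso: "mp_isomorphic_via M T N shift phi"
  unfolding mp_isomorphic_via_def
proof (intro exI conjI ballI impI)
  let ?H2 = "phi ` H1'"
  show "H1' \<in> sets M" by (rule H1'_sets)
  show H2s: "?H2 \<in> sets N" by (rule phi_img_sets[OF H1'_sets subset_refl])
  show "emeasure M (space M - H1') = 0" using H1'_null by auto
  show "T ` H1' \<subseteq> H1'" by (rule T_H1')
  show "shift ` ?H2 \<subseteq> ?H2"
  proof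
    fix y assume "y \<in> shift ` ?H2"
    then obtain x where x: "x \<in> H1'" "y = shift (phi x)" by auto
    then have "y = phi (T x)" using phi_T by simp
    then show "y \<in> ?H2" using T_H1' x(1) by auto
  qed
  show "bij_betw phi H1' ?H2" using phi_inj by (simp add: bij_betw_def)
  fix A assume A: "A \<in> sets M" "A \<subseteq> H1'"
  show "phi ` A \<in> sets N" by (rule phi_img_sets[OF A])
  show "emeasure N (phi ` A) = emeasure M A" by (rule phi_measure[OF A])
next
  let ?H2 = "phi ` H1'"
  fix B assume B: "B \<in> sets N" "B \<subseteq> ?H2"
  have Bs: "B \<in> sets (seq_space S')" using B sets_N by auto
  have "{x\<in>H1'. phi x \<in> B} = {m\<in>H1. psi m \<in> Supp \<inter> (Phi -` B \<inter> space NB)}"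
    unfolding H1'_def phi_def using Supp_def by auto
  also have "\<dots> \<in> sets M" using Supp_sets measurable_sets[OF Phi_meas Bs] by (intro I1(1)) auto
  finally show "{x\<in>H1'. phi x \<in> B} \<in> sets M" .
next
  fix x assume "x \<in> H1'" then show "phi (T x) = shift (phi x)" by (rule phi_T)
next
  let ?H2 = "phi ` H1'"
  have H2s: "?H2 \<in> sets (seq_space S')" using phi_img_sets[OF H1'_sets subset_refl] sets_N by auto
  have sub: "Phi -` (space (seq_space S') - ?H2) \<inter> space NB \<subseteq> (space NB - Supp) \<union> (space NB - H2)"
  proof
    fix x assume x: "x \<in> Phi -` (space (seq_space S') - ?H2) \<inter> space NB"
    show "x \<in> (space NB - Supp) \<union> (space NB - H2)"
    proof (rule ccontr)
      assume "\<not> ?thesis"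
      then have xs: "x \<in> Supp" "x \<in> H2" using x by auto
      then obtain m where m: "m \<in> H1" "psi m = x" using psi_img by auto
      then have "m \<in> H1'" using xs unfolding H1'_def by auto
      then have "Phi x \<in> ?H2" using m unfolding phi_def by auto
      then show False using x by auto
    qed
  qed
  have nul: "(space NB - Supp) \<union> (space NB - H2) \<in> null_sets NB"
    using nonSupp_null H2 H2null by auto
  have ps: "Phi -` (space (seq_space S') - ?H2) \<inter> space NB \<in> sets NB"
    using measurable_sets[OF Phi_meas, of "space (seq_space S') - ?H2"] H2s by auto
  have "emeasure N (space N - ?H2) = emeasure NB (Phi -` (space (seq_space S') - ?H2) \<inter> space NB)"
    unfolding N_def using H2s by (simp add: emeasure_distr[OF Phi_meas])
  also have "\<dots> = 0" using null_sets_subset[OF nul ps sub] by auto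
  finally show "emeasure N (space N - ?H2) = 0" .
qed

end

lemma finite_window: "finite J \<Longrightarrow> \<exists>m::nat. J \<subseteq> {- int m..int m}"
proof -
  assume J: "finite J"
  define m where "m = (\<Sum>j\<in>J. nat \<bar>j\<bar>)"
  have "nat \<bar>j\<bar> \<le> m" if "j \<in> J" for j unfolding m_def using J that by (intro member_le_sum) auto
  then have "J \<subseteq> {- int m..int m}" by force
  then show ?thesis by blast
qed

lemma cyl_fdep: "fdep S J (cylinder S J E)"
  by (rule fdepI) (auto simp: cylinder_def)

context bsys begin

definition apx :: "(int \<Rightarrow> 'b) set \<Rightarrow> bool" where
  "apx X \<longleftrightarrow> (\<forall>\<eta>>0. \<exists>m F. fdep S {- int m..int m} F \<and> measure NB (X - F) + measure NB (F - X) < \<eta>)"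

lemma fdep_sets_NB: "fdep S J F \<Longrightarrow> finite J \<Longrightarrow> F \<in> sets NB"
  using fdep_sets[OF finS] sets_NB by auto

lemma sets_NB_sigma: "sets NB = sigma_sets (space (seq_space S)) (prod_algebra UNIV (\<lambda>_. count_space S))"
  by (simp add: sets_NB seq_space_def sets_PiM space_PiM)

lemma approx_all:
  assumes XS: "X \<in> sets NB"
  shows "apx X"
proof -
  interpret NB: prob_space NB by (rule probNB)
  let ?\<Omega> = "space (seq_space S)"
  have X: "X \<in> sigma_sets ?\<Omega> (prod_algebra UNIV (\<lambda>_. count_space S))" using XS sets_NB_sigma by simp
  have G: "prod_algebra UNIV (\<lambda>_. count_space S) \<subseteq> Pow ?\<Omega>"
    using prod_algebra_sets_into_space[of UNIV "\<lambda>_. count_space S"] by (simp add: seq_space_def space_PiM)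
  have sig: "\<And>A. A \<in> sigma_sets ?\<Omega> (prod_algebra UNIV (\<lambda>_. count_space S)) \<Longrightarrow> A \<in> sets NB"
    using sets_NB_sigma by simp
  from Int_stable_prod_algebra G X show ?thesis
  proof (induction rule: sigma_sets_induct_disjoint)
    case (basic A)
    then obtain J E where A: "A = prod_emb UNIV (\<lambda>_. count_space S) J (PiE J E)" "finite J"
      by (force elim!: prod_algebraE)
    obtain m where m: "J \<subseteq> {- int m..int m}" using finite_window[OF A(2)] by blast
    have "fdep S {- int m..int m} A" unfolding A(1) prod_emb_cyl by (rule fdep_mono[OF cyl_fdep m])
    then show ?case unfolding apx_def by (intro allI impI exI[of _ m] exI[of _ A]) auto
  next
    case empty
    show ?case unfolding apx_def by (intro allI impI exI[of _ 0] exI[of _ "{}"]) (auto simp: fdep_empty)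
  next
    case (compl A)
    have AO: "A \<subseteq> ?\<Omega>" using sig[OF compl.hyps] sets.sets_into_space space_NB by blast
    show ?case unfolding apx_def
    proof (intro allI impI)
      fix \<eta> :: real assume "\<eta> > 0"
      then obtain m F where F: "fdep S {- int m..int m} F" "measure NB (A - F) + measure NB (F - A) < \<eta>"
        using compl.IH unfolding apx_def by blast
      have FO: "F \<subseteq> ?\<Omega>" using F(1) unfolding fdep_def by auto
      have "(?\<Omega> - A) - (?\<Omega> - F) = F - A" "(?\<Omega> - F) - (?\<Omega> - A) = A - F" using AO FO by auto
      then show "\<exists>m F. fdep S {- int m..int m} F \<and> measure NB (?\<Omega> - A - F) + measure NB (F - (?\<Omega> - A)) < \<eta>"
        using F fdep_compl[OF F(1)] by (intro exI[of _ m] exI[of _ "?\<Omega> - F"]) auto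
    qed
  next
    case (union A)
    have As: "A i \<in> sets NB" for i using sig union.hyps(2) by auto
    show ?case unfolding apx_def
    proof (intro allI impI)
      fix \<eta> :: real assume eta: "\<eta> > 0"
      define U where "U N = (\<Union>i\<in>{..<N}. A i)" for N
      have Us: "U N \<in> sets NB" for N unfolding U_def using As by auto
      have incU: "incseq U" unfolding U_def
      proof (intro monoI subsetI)
        fix x y :: nat and z assume "x \<le> y" "z \<in> (\<Union>i\<in>{..<x}. A i)"
        then show "z \<in> (\<Union>i\<in>{..<y}. A i)" by auto
      qed
      have UU: "(\<Union>N. U N) = (\<Union>i. A i)" unfolding U_def by auto
      have "(\<lambda>N. measure NB (U N)) \<longlonglongrightarrow> measure NB (\<Union>i. A i)"
        using NB.finite_Lim_measure_incseq[of U] Us incU UU by auto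
      then have "eventually (\<lambda>N. measure NB (\<Union>i. A i) - \<eta> / 2 < measure NB (U N)) sequentially"
        using eta by (intro order_tendstoD(1)) auto
      then obtain N0 where N0: "measure NB (\<Union>i. A i) - \<eta> / 2 < measure NB (U N0)"
        by (auto simp: eventually_sequentially)
      define \<eta>' where "\<eta>' = \<eta> / (2 * (real N0 + 1))"
      have eta': "\<eta>' > 0" unfolding \<eta>'_def using eta by auto
      have "\<forall>i. \<exists>mF. fdep S {- int (fst mF)..int (fst mF)} (snd mF) \<and>
              measure NB (A i - snd mF) + measure NB (snd mF - A i) < \<eta>'"
        using union.IH eta' unfolding apx_def by fastforce
      then obtain f where f: "\<And>i. fdep S {- int (fst (f i))..int (fst (f i))} (snd (f i)) \<and>
              measure NB (A i - snd (f i)) + measure NB (snd (f i) - A i) < \<eta>'"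
        by metis
      define m where "m = (\<Sum>i<N0. fst (f i))"
      define F where "F = (\<Union>i\<in>{..<N0}. snd (f i))"
      have fdF: "fdep S {- int m..int m} F" unfolding F_def
      proof (rule fdep_UN)
        fix i assume "i \<in> {..<N0}"
        then have "fst (f i) \<le> m" unfolding m_def by (intro member_le_sum) auto
        then show "fdep S {- int m..int m} (snd (f i))" using f[of i] by (auto elim!: fdep_mono)
      qed simp
      have Fs: "snd (f i) \<in> sets NB" for i using f[of i] by (auto intro: fdep_sets_NB)
      have sub1: "(\<Union>i. A i) - F \<subseteq> ((\<Union>i. A i) - U N0) \<union> (\<Union>i\<in>{..<N0}. A i - snd (f i))"
        unfolding F_def U_def by auto
      have sub2: "F - (\<Union>i. A i) \<subseteq> (\<Union>i\<in>{..<N0}. snd (f i) - A i)"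
        unfolding F_def by auto
      have UAs: "(\<Union>i. A i) \<in> sets NB" using As by auto
      have m1: "measure NB ((\<Union>i. A i) - U N0) < \<eta> / 2"
      proof -
        have "U N0 \<subseteq> (\<Union>i. A i)" unfolding U_def by auto
        then have "measure NB ((\<Union>i. A i) - U N0) = measure NB (\<Union>i. A i) - measure NB (U N0)"
          using UAs Us by (intro NB.finite_measure_Diff) auto
        then show ?thesis using N0 by simp
      qed
      have m2: "measure NB (\<Union>i\<in>{..<N0}. A i - snd (f i)) \<le> (\<Sum>i<N0. measure NB (A i - snd (f i)))"
        using As Fs by (intro NB.finite_measure_subadditive_finite) auto
      have m3: "measure NB (\<Union>i\<in>{..<N0}. snd (f i) - A i) \<le> (\<Sum>i<N0. measure NB (snd (f i) - A i))"
        using As Fs by (intro NB.finite_measure_subadditive_finite) auto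
      have "measure NB ((\<Union>i. A i) - F) \<le> measure NB ((\<Union>i. A i) - U N0) + measure NB (\<Union>i\<in>{..<N0}. A i - snd (f i))"
      proof -
        have "measure NB ((\<Union>i. A i) - F) \<le> measure NB (((\<Union>i. A i) - U N0) \<union> (\<Union>i\<in>{..<N0}. A i - snd (f i)))"
          using sub1 As Fs Us by (intro NB.finite_measure_mono) auto
        also have "\<dots> \<le> measure NB ((\<Union>i. A i) - U N0) + measure NB (\<Union>i\<in>{..<N0}. A i - snd (f i))"
          using As Fs Us by (intro measure_Un_le) auto
        finally show ?thesis .
      qed
      moreover have "measure NB (F - (\<Union>i. A i)) \<le> measure NB (\<Union>i\<in>{..<N0}. snd (f i) - A i)"
        using sub2 As Fs by (intro NB.finite_measure_mono) auto
      moreover have "(\<Sum>i<N0. measure NB (A i - snd (f i))) + (\<Sum>i<N0. measure NB (snd (f i) - A i)) \<le> real N0 * \<eta>'"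
      proof -
        have "(\<Sum>i<N0. measure NB (A i - snd (f i))) + (\<Sum>i<N0. measure NB (snd (f i) - A i))
            = (\<Sum>i<N0. measure NB (A i - snd (f i)) + measure NB (snd (f i) - A i))" by (simp add: sum.distrib)
        also have "\<dots> \<le> (\<Sum>i<N0. \<eta>')" using f by (intro sum_mono) (auto intro: less_imp_le)
        finally show ?thesis by simp
      qed
      moreover have "real N0 * \<eta>' \<le> \<eta> / 2"
        unfolding \<eta>'_def using eta by (simp add: field_simps)
      ultimately have "measure NB ((\<Union>i. A i) - F) + measure NB (F - (\<Union>i. A i)) < \<eta>"
        using m1 m2 m3 by linarith
      then show "\<exists>m F. fdep S {- int m..int m} F \<and> measure NB ((\<Union>i. A i) - F) + measure NB (F - (\<Union>i. A i)) < \<eta>"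
        using fdF by blast
    qed
  qed
qed

end

lemma inj_choice:
  assumes "finite B" "\<forall>w\<in>B. infinite (Q w)"
  shows "\<exists>g. inj_on g B \<and> (\<forall>w\<in>B. g w \<in> Q w)"
  using assms
proof (induction B rule: finite_induct)
  case empty then show ?case by auto
next
  case (insert w B)
  then obtain g where g: "inj_on g B" "\<forall>v\<in>B. g v \<in> Q v" by auto
  have "infinite (Q w)" using insert by auto
  then have "Q w - g ` B \<noteq> {}" using insert(1) by (metis Diff_infinite_finite finite_imageI finite.emptyI)
  then obtain a where a: "a \<in> Q w" "a \<notin> g ` B" by auto
  have "inj_on (g(w := a)) (insert w B)" using g(1) a(2) insert(2) by (auto simp: inj_on_def)
  moreover have "\<forall>v\<in>insert w B. (g(w := a)) v \<in> Q v" using g(2) a(1) insert(2) by auto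
  ultimately show ?case by blast
qed

lemma singleton_sets:
  assumes ms: "Metric_space (space M) d" and balls: "\<forall>x\<in>space M. \<forall>r. Metric_space.mball (space M) d x r \<in> sets M"
    and m: "m \<in> space M"
  shows "{m} \<in> sets M"
proof -
  interpret Metric_space "space M" d by (rule ms)
  have "{m} = space M \<inter> (\<Inter>k. mball m (1 / Suc k))"
  proof (intro set_eqI iffI)
    fix y assume "y \<in> {m}"
    moreover have "m \<in> mball m (1 / Suc k)" for k using m by simp
    ultimately show "y \<in> space M \<inter> (\<Inter>k. mball m (1 / Suc k))" using m by auto
  next
    fix y assume y: "y \<in> space M \<inter> (\<Inter>k. mball m (1 / Suc k))"
    then have yX: "y \<in> space M" by auto
    have "d m y \<le> 0"
    proof (rule ccontr)
      assume "\<not> d m y \<le> 0"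
      then have "0 < d m y" by simp
      then obtain k where "inverse (real (Suc k)) < d m y" using reals_Archimedean by blast
      then have "1 / Suc k < d m y" by (simp add: inverse_eq_divide)
      moreover have "d m y < 1 / Suc k" using y by auto
      ultimately show False by simp
    qed
    then have "d m y = 0" using nonneg[of m y] by linarith
    then show "y \<in> {m}" using m yX by simp
  qed
  also have "\<dots> \<in> sets M" using balls m by auto
  finally show ?thesis .
qed

lemma pos_infinite:
  assumes "A \<in> sets M" "measure M A > 0" "\<forall>m\<in>space M. {m} \<in> sets M \<and> measure M {m} = 0"
    and fin: "finite_measure M"
  shows "infinite A"
proof
  assume fA: "finite A"
  have AS: "A \<subseteq> space M" using assms(1) sets.sets_into_space by auto
  have "measure M A = (\<Sum>x\<in>A. measure M {x})"
    using fA AS assms(3) by (intro measure_eq_sum_singleton) (auto simp: finite_measure.emeasure_eq_measure[OF fin])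
  also have "\<dots> = 0" using AS assms(3) by (intro sum.neutral) auto
  finally show False using assms(2) by simp
qed

locale isoB = bsys P Z S NB
  for P :: "'w measure" and Z :: "int \<Rightarrow> 'w \<Rightarrow> 'b" and S :: "'b set" and NB :: "(int \<Rightarrow> 'b) measure" +
  fixes M :: "'a measure" and psi :: "'a \<Rightarrow> int \<Rightarrow> 'b" and H1 H2
  assumes probM: "prob_space M"
    and H1: "H1 \<in> sets M" and H2: "H2 \<in> sets NB"
    and H1null: "emeasure M (space M - H1) = 0" and H2null: "emeasure NB (space NB - H2) = 0"
    and bij: "bij_betw psi H1 H2"
    and img: "\<forall>A\<in>sets M. A \<subseteq> H1 \<longrightarrow> psi ` A \<in> sets NB"
    and pre: "\<forall>B\<in>sets NB. B \<subseteq> H2 \<longrightarrow> {x\<in>H1. psi x \<in> B} \<in> sets M"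
    and meas: "\<forall>A\<in>sets M. A \<subseteq> H1 \<longrightarrow> emeasure NB (psi ` A) = emeasure M A"
begin

lemma psiH2: "x \<in> H1 \<Longrightarrow> psi x \<in> H2" using bij by (auto simp: bij_betw_def)
lemma psi_inj: "inj_on psi H1" using bij by (auto simp: bij_betw_def)
lemma psi_img: "psi ` H1 = H2" using bij by (auto simp: bij_betw_def)
lemma finM: "finite_measure M" using probM by (rule prob_space.finite_measure)

lemma measure_H2_Int: "X \<in> sets NB \<Longrightarrow> measure NB (X \<inter> H2) = measure NB X"
proof -
  assume X: "X \<in> sets NB"
  have nul: "space NB - H2 \<in> null_sets NB" using H2 H2null by auto
  have "X \<inter> H2 = X - (space NB - H2)" using sets.sets_into_space[OF X] by auto
  then show ?thesis using measure_Diff_null_set[OF X nul] by simp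
qed

lemma I1:
  assumes X: "X \<in> sets NB"
  shows "{m\<in>H1. psi m \<in> X} \<in> sets M" and "measure M {m\<in>H1. psi m \<in> X} = measure NB X"
proof -
  have e: "{m\<in>H1. psi m \<in> X} = {m\<in>H1. psi m \<in> X \<inter> H2}" using psiH2 by auto
  have XH: "X \<inter> H2 \<in> sets NB" using X H2 by auto
  show s: "{m\<in>H1. psi m \<in> X} \<in> sets M" unfolding e using pre XH by auto
  have im: "psi ` {m\<in>H1. psi m \<in> X} = X \<inter> H2" using psi_img psiH2 by auto
  have "emeasure NB (X \<inter> H2) = emeasure M {m\<in>H1. psi m \<in> X}" using meas s im by (metis (no_types, lifting) mem_Collect_eq subsetI)
  then have "measure NB (X \<inter> H2) = measure M {m\<in>H1. psi m \<in> X}" by (simp add: measure_def)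
  then show "measure M {m\<in>H1. psi m \<in> X} = measure NB X" using measure_H2_Int[OF X] by simp
qed

lemma measure_img: "A \<in> sets M \<Longrightarrow> A \<subseteq> H1 \<Longrightarrow> measure NB (psi ` A) = measure M A"
  using meas by (auto simp: measure_def)

definition Hp where "Hp = {m\<in>H1. psi m \<in> Supp}"

lemma Hp_sets: "Hp \<in> sets M" unfolding Hp_def by (rule I1(1)[OF Supp_sets])

lemma Hp_null: "space M - Hp \<in> null_sets M"
proof -
  have a: "space M - H1 \<in> null_sets M" using H1 H1null by auto
  have "measure M {m\<in>H1. psi m \<in> space NB - Supp} = 0"
    using I1(2)[of "space NB - Supp"] Supp_sets nonSupp_null by (auto simp: null_sets_def measure_def)
  then have b: "{m\<in>H1. psi m \<in> space NB - Supp} \<in> null_sets M"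
    using I1(1)[of "space NB - Supp"] Supp_sets
    by (intro null_setsI) (auto simp: finite_measure.emeasure_eq_measure[OF finM])
  have "space M - Hp \<subseteq> (space M - H1) \<union> {m\<in>H1. psi m \<in> space NB - Supp}"
    unfolding Hp_def using psiH2 sets.sets_into_space[OF H2] by auto
  moreover have "space M - Hp \<in> sets M" using Hp_sets by auto
  ultimately show ?thesis using a b by (meson null_sets.Un null_sets_subset)
qed

lemma Hp_measure: "measure M (space M - Hp) = 0"
  using Hp_null by (auto simp: null_sets_def measure_def)

lemma p_bound:
  assumes a: "a \<in> L" and b: "b \<in> L" and ab: "a \<noteq> b"
  shows "p s \<le> 1 - min (p a) (p b)"
proof -
  have aS: "a \<in> S" and bS: "b \<in> S" using a b L_sub by auto
  have two: "p x + p y \<le> 1" if "x \<in> S" "y \<in> S" "x \<noteq> y" for x y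
  proof -
    have "p x + p y = (\<Sum>z\<in>{x, y}. p z)" using that by simp
    also have "\<dots> \<le> (\<Sum>z\<in>S. p z)" using that finS p_nonneg by (intro sum_mono2) auto
    finally show ?thesis using sum_p by simp
  qed
  show ?thesis
  proof (cases "s \<in> S")
    case False then show ?thesis using p_out[OF False] two[OF aS bS ab] p_nonneg[of a] p_nonneg[of b]
        min.cobounded1[of "p a" "p b"] by linarith
  next
    case True
    show ?thesis
    proof (cases "s = a")
      case True then show ?thesis using two[OF aS bS ab] min.cobounded2[of "p a" "p b"] by simp
    next
      case False then show ?thesis using two[OF \<open>s \<in> S\<close> aS False] min.cobounded1[of "p a" "p b"] by linarith
    qed
  qed
qed

lemma atomless:
  assumes a: "a \<in> L" and b: "b \<in> L" and ab: "a \<noteq> b" and m: "m \<in> space M" and sm: "{m} \<in> sets M"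
  shows "measure M {m} = 0"
proof -
  interpret M: finite_measure M by (rule finM)
  define q where "q = 1 - min (p a) (p b)"
  have pa: "p a > 0" "p b > 0" using a b by (auto simp: L_def)
  have q1: "q < 1" unfolding q_def using pa by simp
  have pq: "p s \<le> q" for s unfolding q_def by (rule p_bound[OF a b ab])
  have q0: "0 \<le> q" using pq[of a] p_nonneg[of a] by linarith
  have bound: "measure M {m} \<le> q ^ k" for k
  proof (cases "m \<in> H1")
    case False
    then have "{m} \<subseteq> space M - H1" using m by auto
    moreover have "measure M (space M - H1) = 0" using H1null by (simp add: measure_def)
    ultimately have "measure M {m} \<le> 0" using H1 by (metis M.finite_measure_mono sets.compl_sets)
    then show ?thesis using q0 by (meson order.trans zero_le_power)
  next
    case True
    define X where "X = {x\<in>space NB. \<forall>l\<in>{- int k..int k}. x l = psi m l}"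
    have Xs: "X \<in> sets NB" unfolding X_def using cylpt_sets[of "{- int k..int k}" S "psi m"] by (simp add: sets_NB space_NB)
    have "{m} \<subseteq> {m'\<in>H1. psi m' \<in> X}" using True psiH2 sets.sets_into_space[OF H2] unfolding X_def by auto
    then have "measure M {m} \<le> measure M {m'\<in>H1. psi m' \<in> X}" using I1(1)[OF Xs] by (rule M.finite_measure_mono)
    also have "\<dots> = measure NB X" by (rule I1(2)[OF Xs])
    also have "\<dots> = (\<Prod>l\<in>{- int k..int k}. p (psi m l))" unfolding X_def by (rule pt_measure) simp
    also have "\<dots> \<le> (\<Prod>l\<in>{- int k..int k}. q)" using pq p_nonneg by (intro prod_mono) auto
    also have "\<dots> = q ^ card {- int k..int k}" by simp
    also have "\<dots> \<le> q ^ k" using q0 q1 by (intro power_decreasing) auto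
    finally show ?thesis .
  qed
  show ?thesis
  proof (rule ccontr)
    assume "measure M {m} \<noteq> 0"
    then have "measure M {m} > 0" using measure_nonneg[of M "{m}"] by linarith
    then obtain k where "q ^ k < measure M {m}" using real_arch_pow_inv[OF _ q1] by blast
    then show False using bound[of k] by simp
  qed
qed

end

lemma pieces:
  assumes ms: "Metric_space (space M) d" and sep: "separable_space (Metric_space.mtopology (space M) d)"
    and balls: "\<forall>x\<in>space M. \<forall>r. Metric_space.mball (space M) d x r \<in> sets M"
    and probM: "prob_space M" and eps: "\<epsilon> > 0" and del: "\<delta> > 0"
  shows "\<exists>(K::nat) (Pc::nat \<Rightarrow> 'a set). (\<forall>k. Pc k \<in> sets M) \<and> disjoint_family Pc \<and> (\<forall>k. \<forall>x\<in>Pc k. \<forall>y\<in>Pc k. d x y < \<epsilon>)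
      \<and> (\<forall>k. Pc k \<subseteq> space M) \<and> measure M (space M - (\<Union>k\<in>{..<K}. Pc k)) < \<delta>"
proof -
  interpret Metric_space "space M" d by (rule ms)
  interpret PM: prob_space M by (rule probM)
  obtain C where C: "countable C" "C \<subseteq> space M" "mtopology closure_of C = space M"
    using sep unfolding separable_space_def by auto
  have Cne: "C \<noteq> {}" using C(3) PM.not_empty by auto
  define c where "c = from_nat_into C"
  have cC: "c k \<in> C" for k unfolding c_def using from_nat_into[OF Cne] .
  have cM: "c k \<in> space M" for k using cC C(2) by auto
  have cover: "\<exists>k. d (c k) x < \<epsilon> / 2" if x: "x \<in> space M" for x
  proof -
    have "x \<in> mtopology closure_of C" using C(3) x by simp
    then have "\<forall>r>0. \<exists>y\<in>C. y \<in> mball x r" unfolding metric_closure_of by auto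
    moreover have "\<epsilon> / 2 > 0" using eps by simp
    ultimately have "\<exists>y\<in>C. y \<in> mball x (\<epsilon> / 2)" by blast
    then obtain y where y: "y \<in> C" "y \<in> mball x (\<epsilon> / 2)" by blast
    obtain k where "c k = y" unfolding c_def using from_nat_into_surj[OF C(1) y(1)] by auto
    then show ?thesis using y(2) commute by auto
  qed
  define Bk where "Bk k = mball (c k) (\<epsilon> / 2)" for k
  define Pc where "Pc k = Bk k - (\<Union>i\<in>{..<k}. Bk i)" for k
  have Bks: "Bk k \<in> sets M" for k unfolding Bk_def using balls cM by auto
  have Pcs: "Pc k \<in> sets M" for k unfolding Pc_def using Bks by auto
  have PcM: "Pc k \<subseteq> space M" for k unfolding Pc_def Bk_def by auto
  have disj: "disjoint_family Pc"
    unfolding disjoint_family_on_def Pc_def by (auto simp: neq_iff)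
  have diam: "\<forall>x\<in>Pc k. \<forall>y\<in>Pc k. d x y < \<epsilon>" for k
  proof (intro ballI)
    fix x y assume "x \<in> Pc k" "y \<in> Pc k"
    then have xy: "x \<in> space M" "y \<in> space M" "d (c k) x < \<epsilon> / 2" "d (c k) y < \<epsilon> / 2"
      unfolding Pc_def Bk_def by auto
    have "d x y \<le> d x (c k) + d (c k) y" using triangle xy cM by blast
    also have "\<dots> = d (c k) x + d (c k) y" using commute by simp
    finally show "d x y < \<epsilon>" using xy by simp
  qed
  have Uall: "(\<Union>k. Pc k) = space M"
  proof
    show "(\<Union>k. Pc k) \<subseteq> space M" using PcM by auto
    show "space M \<subseteq> (\<Union>k. Pc k)"
    proof
      fix x assume x: "x \<in> space M"
      then have ex: "\<exists>k. x \<in> Bk k" using cover cM unfolding Bk_def by auto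
      define k0 where "k0 = (LEAST k. x \<in> Bk k)"
      have "x \<in> Bk k0" unfolding k0_def using ex by (rule LeastI_ex)
      moreover have "x \<notin> Bk i" if "i < k0" for i using not_less_Least[OF that[unfolded k0_def]] .
      ultimately have "x \<in> Pc k0" unfolding Pc_def by auto
      then show "x \<in> (\<Union>k. Pc k)" by auto
    qed
  qed
  define U where "U K = (\<Union>k\<in>{..<K}. Pc k)" for K
  have Us: "U K \<in> sets M" for K unfolding U_def using Pcs by auto
  have incU: "incseq U" unfolding U_def
  proof (intro monoI subsetI)
    fix x y :: nat and z assume "x \<le> y" "z \<in> (\<Union>k\<in>{..<x}. Pc k)"
    then show "z \<in> (\<Union>k\<in>{..<y}. Pc k)" by auto
  qed
  have UU: "(\<Union>K. U K) = space M" unfolding U_def using Uall by auto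
  have "(\<lambda>K. measure M (U K)) \<longlonglongrightarrow> measure M (\<Union>K. U K)"
    using PM.finite_Lim_measure_incseq[of U] Us incU by auto
  then have "(\<lambda>K. measure M (U K)) \<longlonglongrightarrow> 1" using UU PM.prob_space by simp
  then have "eventually (\<lambda>K. 1 - \<delta> < measure M (U K)) sequentially"
    using del by (intro order_tendstoD(1)) auto
  then obtain K where K: "1 - \<delta> < measure M (U K)" by (auto simp: eventually_sequentially)
  have "measure M (space M - U K) = 1 - measure M (U K)"
    using PM.finite_measure_compl[OF Us] PM.prob_space by simp
  then have fin: "measure M (space M - U K) < \<delta>" using K by simp
  show ?thesis
  proof (intro exI[of _ K] exI[of _ Pc] conjI)
    show "\<forall>k. Pc k \<in> sets M" using Pcs by simp
    show "disjoint_family Pc" by (rule disj)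
    show "\<forall>k. \<forall>x\<in>Pc k. \<forall>y\<in>Pc k. d x y < \<epsilon>" using diam by simp
    show "\<forall>k. Pc k \<subseteq> space M" using PcM by simp
    show "measure M (space M - (\<Union>k\<in>{..<K}. Pc k)) < \<delta>" using fin unfolding U_def .
  qed
qed


context isoB begin

lemma eps_construct:
  fixes d :: "'a \<Rightarrow> 'a \<Rightarrow> real" and \<epsilon> :: real
  assumes ms: "Metric_space (space M) d" and sep: "separable_space (Metric_space.mtopology (space M) d)"
    and balls: "\<forall>x\<in>space M. \<forall>r. Metric_space.mball (space M) d x r \<in> sets M"
    and eps: "\<epsilon> > 0"
  shows "\<exists>(n::nat) (g :: (int \<Rightarrow> 'b) \<Rightarrow> 'a). inj_on g (PiE {- int n..int n} (\<lambda>_. L))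
     \<and> g ` PiE {- int n..int n} (\<lambda>_. L) \<subseteq> space M
     \<and> (\<exists>E\<in>sets M. measure M E < \<epsilon> \<and>
          (\<forall>m\<in>space M - E. m \<in> Hp \<and> d m (g (restrict (psi m) {- int n..int n})) < \<epsilon>))"
proof -
  interpret MM: prob_space M by (rule probM)
  interpret NBm: prob_space NB by (rule probNB)
  obtain K :: nat and Pc :: "nat \<Rightarrow> 'a set" where
    Pcs: "\<forall>k. Pc k \<in> sets M" and disj: "disjoint_family Pc" and diam: "\<forall>k. \<forall>x\<in>Pc k. \<forall>y\<in>Pc k. d x y < \<epsilon>"
    and PcM: "\<forall>k. Pc k \<subseteq> space M" and cov: "measure M (space M - (\<Union>k\<in>{..<K}. Pc k)) < \<epsilon> / 2"
    using pieces[OF ms sep balls probM eps, of "\<epsilon> / 2"] eps by auto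
  define \<eta> where "\<eta> = \<epsilon> / (4 * (real K * real K + 1))"
  have K0: "0 < 4 * (real K * real K + 1)"
  proof -
    have h: "0 < real K * real K + 1" by (rule add_nonneg_pos) simp_all
    then show ?thesis by (rule mult_pos_pos[rotated]) simp
  qed
  have eta: "\<eta> > 0" unfolding \<eta>_def using eps K0 by (rule divide_pos_pos)
  define A where "A k = psi ` (Pc k \<inter> H1)" for k
  have PcH: "Pc k \<inter> H1 \<in> sets M" for k using Pcs H1 by auto
  have As: "A k \<in> sets NB" for k unfolding A_def using img PcH by auto
  have mA: "measure NB (A k) = measure M (Pc k \<inter> H1)" for k
    unfolding A_def by (rule measure_img[OF PcH]) auto
  have "\<forall>k. \<exists>mF. fdep S {- int (fst mF)..int (fst mF)} (snd mF)
      \<and> measure NB (A k - snd mF) + measure NB (snd mF - A k) < \<eta> \<and> (measure M (Pc k) = 0 \<longrightarrow> snd mF = {})"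
  proof
    fix k
    show "\<exists>mF. fdep S {- int (fst mF)..int (fst mF)} (snd mF)
      \<and> measure NB (A k - snd mF) + measure NB (snd mF - A k) < \<eta> \<and> (measure M (Pc k) = 0 \<longrightarrow> snd mF = {})"
    proof (cases "measure M (Pc k) = 0")
      case True
      have "measure M (Pc k \<inter> H1) \<le> measure M (Pc k)" using Pcs by (intro MM.finite_measure_mono) auto
      then have "measure NB (A k) = 0" using mA[of k] True measure_nonneg[of M "Pc k \<inter> H1"] by linarith
      then show ?thesis using eta by (intro exI[of _ "(0, {})"]) (auto simp: fdep_empty)
    next
      case False
      obtain m F where "fdep S {- int m..int m} F" "measure NB (A k - F) + measure NB (F - A k) < \<eta>"
        using approx_all[OF As[of k]] eta unfolding apx_def by blast
      then show ?thesis using False by (intro exI[of _ "(m, F)"]) auto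
    qed
  qed
  then obtain f where f: "\<And>k. fdep S {- int (fst (f k))..int (fst (f k))} (snd (f k))
      \<and> measure NB (A k - snd (f k)) + measure NB (snd (f k) - A k) < \<eta> \<and> (measure M (Pc k) = 0 \<longrightarrow> snd (f k) = {})"
    by metis
  define n where "n = (\<Sum>k<K. fst (f k))"
  define W where "W = {- int n..int n}"
  define F where "F k = snd (f k)" for k
  have fdF: "fdep S W (F k)" if "k < K" for k
  proof -
    have "fst (f k) \<le> n" unfolding n_def using that by (intro member_le_sum) auto
    then show ?thesis using f[of k] unfolding F_def W_def by (auto elim!: fdep_mono)
  qed
  have Fs: "F k \<in> sets NB" for k using f[of k] unfolding F_def by (auto intro: fdep_sets_NB)
  have errF: "measure NB (A k - F k) + measure NB (F k - A k) < \<eta>" for k using f[of k] unfolding F_def by auto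
  have Fnull: "measure M (Pc k) = 0 \<Longrightarrow> F k = {}" for k using f[of k] unfolding F_def by auto
  define F' where "F' k = F k - (\<Union>i\<in>{..<k}. F i)" for k
  have F's: "F' k \<in> sets NB" for k unfolding F'_def using Fs by auto
  have fdF': "fdep S W (F' k)" if "k < K" for k
    unfolding F'_def using that by (intro fdep_Diff fdF fdep_UN) auto
  have disjF': "F' i \<inter> F' k = {}" if "i < k" for i k unfolding F'_def using that by auto
  define B where "B = PiE W (\<lambda>_. L)"
  have finB: "finite B" unfolding B_def W_def using finL by (simp add: finite_PiE)
  define hasK where "hasK w \<longleftrightarrow> (\<exists>k<K. \<exists>x\<in>F' k. restrict x W = w)" for w
  define kk where "kk w = (SOME k. k < K \<and> (\<exists>x\<in>F' k. restrict x W = w))" for w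
  have kk: "kk w < K \<and> (\<exists>x\<in>F' (kk w). restrict x W = w)" if "hasK w" for w
    unfolding kk_def using that unfolding hasK_def by (rule someI_ex)
  define Q where "Q w = (if hasK w then Pc (kk w) else space M)" for w
  have QM: "Q w \<subseteq> space M" for w unfolding Q_def using PcM by auto
  have Qpos: "Q w \<in> sets M \<and> measure M (Q w) > 0" for w
  proof (cases "hasK w")
    case True
    then obtain x where "x \<in> F' (kk w)" using kk by blast
    then have "F (kk w) \<noteq> {}" unfolding F'_def by auto
    then have "measure M (Pc (kk w)) \<noteq> 0" using Fnull by blast
    then have "measure M (Pc (kk w)) > 0" using measure_nonneg[of M "Pc (kk w)"] by linarith
    then show ?thesis unfolding Q_def using True Pcs by auto
  next
    case False
    then show ?thesis unfolding Q_def using MM.prob_space by auto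
  qed
  have Qne: "Q w \<noteq> {}" for w using Qpos[of w] by (metis measure_empty less_irrefl)
  obtain g where g: "inj_on g B" "\<forall>w\<in>B. g w \<in> Q w"
  proof (cases "\<exists>a\<in>L. \<exists>b\<in>L. a \<noteq> b")
    case True
    then obtain a b where ab: "a \<in> L" "b \<in> L" "a \<noteq> b" by auto
    have sing: "\<forall>m\<in>space M. {m} \<in> sets M \<and> measure M {m} = 0"
      using singleton_sets[OF ms balls] atomless[OF ab] by auto
    have "infinite (Q w)" for w using pos_infinite[of "Q w" M] Qpos[of w] sing MM.finite_measure_axioms by blast
    then show ?thesis using inj_choice[OF finB, of Q] that by blast
  next
    case False
    obtain a where a: "a \<in> L" using L_ne by auto
    have La: "L = {a}" using False a by auto
    have "B = {restrict (\<lambda>_. a) W}" unfolding B_def La by (auto simp: PiE_iff extensional_def restrict_def fun_eq_iff)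
    then have "inj_on (\<lambda>w. SOME x. x \<in> Q w) B" "\<forall>w\<in>B. (SOME x. x \<in> Q w) \<in> Q w"
      using Qne by (auto simp: some_in_eq)
    then show ?thesis using that by blast
  qed
  have gM: "g ` B \<subseteq> space M" using g(2) QM by blast
  define G0 where "G0 = (\<Union>k\<in>{..<K}. Pc k \<inter> {m\<in>H1. psi m \<in> Supp \<inter> F' k})"
  have G0s: "G0 \<in> sets M" unfolding G0_def
  proof (rule sets.finite_UN)
    fix k
    have "Supp \<inter> F' k \<in> sets NB" using Supp_sets F's by auto
    then have "{m\<in>H1. psi m \<in> Supp \<inter> F' k} \<in> sets M" by (rule I1(1))
    then show "Pc k \<inter> {m\<in>H1. psi m \<in> Supp \<inter> F' k} \<in> sets M" by (rule sets.Int[rotated]) (use Pcs in blast)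
  qed simp
  define E where "E = space M - G0"
  have Es: "E \<in> sets M" unfolding E_def using G0s by auto
  have close: "m \<in> Hp \<and> d m (g (restrict (psi m) W)) < \<epsilon>" if m: "m \<in> space M - E" for m
  proof -
    from m obtain k where k: "k < K" "m \<in> Pc k" "m \<in> H1" "psi m \<in> Supp" "psi m \<in> F' k"
      unfolding E_def G0_def by auto
    define w where "w = restrict (psi m) W"
    have hw: "hasK w" unfolding hasK_def w_def using k by blast
    obtain x where x: "x \<in> F' (kk w)" "restrict x W = w" using kk[OF hw] by blast
    have kkK: "kk w < K" using kk[OF hw] by blast
    have xs: "x \<in> space (seq_space S)" using fdF'[OF kkK] x(1) unfolding fdep_def by auto
    have ps: "psi m \<in> space (seq_space S)" using k(4) unfolding Supp_def space_NB by auto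
    have agree: "\<forall>i\<in>W. x i = psi m i" using x(2) unfolding w_def by (metis restrict_apply')
    have "psi m \<in> F' (kk w)" using fdep_iff[OF fdF'[OF kkK] xs ps agree] x(1) by simp
    then have "kk w = k" using k(5) disjF' by (metis disjoint_iff linorder_neqE_nat)
    then have "g w \<in> Pc k" using g(2) hw unfolding Q_def
      by (metis (mono_tags, lifting) B_def Supp_def k(4) PiE_iff mem_Collect_eq restrict_PiE_iff w_def)
    then have "d m (g w) < \<epsilon>" using diam k(2) by blast
    moreover have "m \<in> Hp" unfolding Hp_def using k by auto
    ultimately show ?thesis unfolding w_def by simp
  qed
  define R where "R = (\<Union>k\<in>{..<K}. {m\<in>H1. psi m \<in> A k - F' k})"
  have Rk: "{m\<in>H1. psi m \<in> A k - F' k} \<in> sets M" for k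
  proof -
    have "A k - F' k \<in> sets NB" using As F's by auto
    then show ?thesis by (rule I1(1))
  qed
  have Rs: "R \<in> sets M" unfolding R_def using Rk by auto
  have Esub: "E \<subseteq> (space M - (\<Union>k\<in>{..<K}. Pc k)) \<union> (space M - Hp) \<union> R"
  proof
    fix m assume mE: "m \<in> E"
    show "m \<in> (space M - (\<Union>k\<in>{..<K}. Pc k)) \<union> (space M - Hp) \<union> R"
    proof (cases "m \<in> (\<Union>k\<in>{..<K}. Pc k) \<and> m \<in> Hp")
      case True
      then obtain k where k: "k < K" "m \<in> Pc k" "m \<in> H1" "psi m \<in> Supp" unfolding Hp_def by auto
      have "psi m \<notin> F' k" using mE k unfolding E_def G0_def by auto
      moreover have "psi m \<in> A k" using k unfolding A_def by auto
      ultimately show ?thesis unfolding R_def using k by auto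
    next
      case False
      then show ?thesis using mE unfolding E_def by auto
    qed
  qed
  have AF': "measure NB (A k - F' k) \<le> real K * \<eta>" if kK: "k < K" for k
  proof -
    have sub: "A k - F' k \<subseteq> (A k - F k) \<union> (\<Union>i\<in>{..<k}. F i - A i)"
    proof
      fix x assume x: "x \<in> A k - F' k"
      show "x \<in> (A k - F k) \<union> (\<Union>i\<in>{..<k}. F i - A i)"
      proof (cases "x \<in> F k")
        case False then show ?thesis using x by auto
      next
        case True
        then obtain i where i: "i < k" "x \<in> F i" using x unfolding F'_def by auto
        obtain m where m: "m \<in> Pc k" "m \<in> H1" "x = psi m" using x unfolding A_def by auto
        have "x \<notin> A i"
        proof
          assume "x \<in> A i"
          then obtain m' where m': "m' \<in> Pc i" "m' \<in> H1" "x = psi m'" unfolding A_def by auto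
          then have "m = m'" using m psi_inj by (auto dest: inj_onD)
          moreover have "Pc i \<inter> Pc k = {}" using disj i(1) unfolding disjoint_family_on_def by auto
          ultimately show False using m(1) m'(1) by auto
        qed
        then show ?thesis using i by auto
      qed
    qed
    have "measure NB (A k - F' k) \<le> measure NB ((A k - F k) \<union> (\<Union>i\<in>{..<k}. F i - A i))"
      using sub As Fs by (intro NBm.finite_measure_mono) auto
    also have "\<dots> \<le> measure NB (A k - F k) + measure NB (\<Union>i\<in>{..<k}. F i - A i)"
      using As Fs by (intro measure_Un_le) auto
    also have "measure NB (\<Union>i\<in>{..<k}. F i - A i) \<le> (\<Sum>i<k. measure NB (F i - A i))"
      using As Fs by (intro NBm.finite_measure_subadditive_finite) auto
    also have "(\<Sum>i<k. measure NB (F i - A i)) \<le> (\<Sum>i<k. \<eta>)"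
    proof (rule sum_mono)
      fix i show "measure NB (F i - A i) \<le> \<eta>" using errF[of i] measure_nonneg[of NB "A i - F i"] by linarith
    qed
    finally have "measure NB (A k - F' k) \<le> measure NB (A k - F k) + real k * \<eta>" by simp
    also have "measure NB (A k - F k) \<le> \<eta>" using errF[of k] measure_nonneg[of NB "F k - A k"] by linarith
    finally have "measure NB (A k - F' k) \<le> real (Suc k) * \<eta>" by (simp add: algebra_simps)
    also have "\<dots> \<le> real K * \<eta>" using kK eta by (intro mult_right_mono) auto
    finally show ?thesis .
  qed
  have mR: "measure M R \<le> real K * (real K * \<eta>)"
  proof -
    have "measure M R \<le> (\<Sum>k<K. measure M {m\<in>H1. psi m \<in> A k - F' k})"
      unfolding R_def using Rk by (intro MM.finite_measure_subadditive_finite) auto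
    also have "\<dots> = (\<Sum>k<K. measure NB (A k - F' k))"
    proof (rule sum.cong[OF refl])
      fix k have "A k - F' k \<in> sets NB" using As F's by auto
      then show "measure M {m\<in>H1. psi m \<in> A k - F' k} = measure NB (A k - F' k)" by (rule I1(2))
    qed
    also have "\<dots> \<le> (\<Sum>k<K. real K * \<eta>)" using AF' by (intro sum_mono) auto
    finally show ?thesis by simp
  qed
  have "real K * (real K * \<eta>) < \<epsilon> / 4"
  proof -
    have "real K * (real K * \<eta>) = \<epsilon> / 4 * (real K * real K / (real K * real K + 1))"
      unfolding \<eta>_def by (simp add: field_simps)
    also have "\<dots> < \<epsilon> / 4 * 1" using eps K0 by (intro mult_strict_left_mono) auto
    finally show ?thesis by simp
  qed
  then have mR': "measure M R < \<epsilon> / 4" using mR by linarith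
  have e1: "measure M E \<le> measure M ((space M - (\<Union>k\<in>{..<K}. Pc k)) \<union> (space M - Hp) \<union> R)"
    using Esub Pcs Hp_sets Rs by (intro MM.finite_measure_mono) auto
  have e2: "measure M ((space M - (\<Union>k\<in>{..<K}. Pc k)) \<union> (space M - Hp) \<union> R)
      \<le> measure M ((space M - (\<Union>k\<in>{..<K}. Pc k)) \<union> (space M - Hp)) + measure M R"
    using Pcs Hp_sets Rs by (intro measure_Un_le) auto
  have e3: "measure M ((space M - (\<Union>k\<in>{..<K}. Pc k)) \<union> (space M - Hp))
      \<le> measure M (space M - (\<Union>k\<in>{..<K}. Pc k)) + measure M (space M - Hp)"
    using Pcs Hp_sets by (intro measure_Un_le) auto
  have "measure M E < \<epsilon>" using e1 e2 e3 cov mR' Hp_measure eps by linarith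
  have gB: "inj_on g (PiE {- int n..int n} (\<lambda>_. L))" "g ` PiE {- int n..int n} (\<lambda>_. L) \<subseteq> space M"
    using g(1) gM unfolding B_def W_def by auto
  show ?thesis
    using gB \<open>measure M E < \<epsilon>\<close> Es close unfolding W_def by blast
qed

end

theorem theorem2:
  fixes M :: "'a measure" and T :: "'a \<Rightarrow> 'a" and d :: "'a \<Rightarrow> 'a \<Rightarrow> real"
    and P :: "'w measure" and Z :: "int \<Rightarrow> 'w \<Rightarrow> 'b" and S :: "'b set"
    and NB :: "(int \<Rightarrow> 'b) measure" and \<psi> :: "'a \<Rightarrow> (int \<Rightarrow> 'b)"
    and \<epsilon> :: real
  assumes sys: "mp_system M T"
    and bern: "bernoulli_process P Z S" "det_rep P Z S NB"
    and iso: "mp_isomorphic_via M T NB shift \<psi>"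
    and metric: "Metric_space (space M) d"
    and separable: "separable_space (Metric_space.mtopology (space M) d)"
    and balls: "\<forall>x\<in>space M. \<forall>r. Metric_space.mball (space M) d x r \<in> sets M"
    and eps: "\<epsilon> > 0"
  shows "\<exists>(S' :: 'a set) (N :: (int \<Rightarrow> 'a) measure).
           S' \<subseteq> space M \<and> finite S'
         \<and> markov_process N (\<lambda>t m. m t) S'
         \<and> irreducible_proc N (\<lambda>t m. m t) S' \<and> aperiodic_proc N (\<lambda>t m. m t) S'
         \<and> det_rep N (\<lambda>t m. m t) S' N
         \<and> eps_congruent M T d N \<epsilon>"
proof -
  obtain H1 H2 where H: "H1 \<in> sets M" "H2 \<in> sets NB"
    "emeasure M (space M - H1) = 0" "emeasure NB (space NB - H2) = 0"
    "T ` H1 \<subseteq> H1" "shift ` H2 \<subseteq> H2"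
    "bij_betw \<psi> H1 H2"
    "\<forall>A\<in>sets M. A \<subseteq> H1 \<longrightarrow> \<psi> ` A \<in> sets NB"
    "\<forall>B\<in>sets NB. B \<subseteq> H2 \<longrightarrow> {x\<in>H1. \<psi> x \<in> B} \<in> sets M"
    "\<forall>A\<in>sets M. A \<subseteq> H1 \<longrightarrow> emeasure NB (\<psi> ` A) = emeasure M A"
    "\<forall>x\<in>H1. \<psi> (T x) = shift (\<psi> x)"
    using iso unfolding mp_isomorphic_via_def by (elim exE conjE) (rule that; assumption)
  have probM: "prob_space M" using sys unfolding mp_system_def by blast
  interpret B: bsys P Z S NB by unfold_locales (use bern in auto)
  interpret I: isoB P Z S NB M \<psi> H1 H2
    by (rule isoB.intro[OF B.bsys_axioms isoB_axioms.intro]) (rule probM H(1) H(2) H(3) H(4) H(7) H(8) H(9) H(10))+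
  obtain n :: nat and g :: "(int \<Rightarrow> 'b) \<Rightarrow> 'a" where
    g: "inj_on g (PiE {- int n..int n} (\<lambda>_. B.L))" "g ` PiE {- int n..int n} (\<lambda>_. B.L) \<subseteq> space M"
    and E: "\<exists>E\<in>sets M. measure M E < \<epsilon> \<and>
          (\<forall>m\<in>space M - E. m \<in> I.Hp \<and> d m (g (restrict (\<psi> m) {- int n..int n})) < \<epsilon>)"
    using I.eps_construct[OF metric separable balls eps] by blast
  interpret F: full P Z S NB n g M T \<psi> H1 H2
  proof (rule full.intro)
    show "coded P Z S NB n g"
    proof (rule coded.intro[OF B.bsys_axioms coded_axioms.intro])
      show "inj_on g (PiE {- int n..int n} (\<lambda>_. {s\<in>S. measure P {\<omega>\<in>space P. Z 0 \<omega> = s} > 0}))"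
        using g(1) by (simp add: B.L_def B.p_def)
    qed
    show "full_axioms NB M T \<psi> H1 H2"
      by (rule full_axioms.intro) (rule probM H(1) H(2) H(3) H(4) H(5) H(7) H(8) H(9) H(10) H(11))+
  qed
  have S'M: "F.S' \<subseteq> space M" using g(2) unfolding F.S'_def F.B_def F.W_def by auto
  have dr: "det_rep F.N (\<lambda>t m. m t) F.S' F.N"
    unfolding det_rep_def
  proof (intro conjI allI impI)
    show "sets F.N = sets (seq_space F.S')" by (rule F.sets_N)
    fix I :: "int set" and A :: "int \<Rightarrow> 'a set"
    have "cylinder F.S' I A = {\<omega>\<in>space F.N. \<forall>i\<in>I. \<omega> i \<in> A i}"
      unfolding cylinder_def F.space_N by simp
    then show "emeasure F.N (cylinder F.S' I A) = emeasure F.N {\<omega>\<in>space F.N. \<forall>i\<in>I. \<omega> i \<in> A i}" by simp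
  qed
  have ec: "eps_congruent M T d F.N \<epsilon>"
    unfolding eps_congruent_def
  proof (intro exI[of _ F.phi] conjI)
    show "mp_isomorphic_via M T F.N shift F.phi" by (rule F.iso)
    obtain E where E1: "E \<in> sets M" "measure M E < \<epsilon>"
      and E2: "\<forall>m\<in>space M - E. m \<in> I.Hp \<and> d m (g (restrict (\<psi> m) {- int n..int n})) < \<epsilon>"
      using E by blast
    have "d m (F.phi m 0) < \<epsilon>" if m: "m \<in> space M - E" for m
    proof -
      have hp: "m \<in> I.Hp" using E2 m by blast
      then have sup: "\<psi> m \<in> B.Supp" unfolding I.Hp_def by auto
      have "F.phi m 0 = g (F.blk 0 (\<psi> m))" unfolding F.phi_def using F.Phi_Supp[OF sup] by simp
      also have "F.blk 0 (\<psi> m) = restrict (\<psi> m) {- int n..int n}"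
        unfolding F.blk_def F.W_def by (simp add: restrict_def)
      finally have eq: "F.phi m 0 = g (restrict (\<psi> m) {- int n..int n})" .
      have dm: "d m (g (restrict (\<psi> m) {- int n..int n})) < \<epsilon>" using E2 m by blast
      show ?thesis unfolding eq by (rule dm)
    qed
    then show "\<exists>E\<in>sets M. measure M E < \<epsilon> \<and> (\<forall>m\<in>space M - E. d m (F.phi m 0) < \<epsilon>)"
      using E1 by blast
  qed
  show ?thesis
    using S'M F.finS' F.markov F.irreducible F.aperiodic dr ec by blast
qed


end
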